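(* Let $(X,d)$ be a geodesic length space that is a proper metric space, $I\subseteq\mathbb{R}$ an open interval and $f:I\to(0,\infty)$ continuous. Then the generalized cone $I\times_f X$ is globally hyperbolic.
   Context: $Y=I\times_f X$ is the set $I\times X$ with metric $D((t,x),(t',x'))=|t-t'|+d(x,x')$. A curve $\gamma=(\alpha,\beta)$ is causal if $D$-absolutely continuous, $\alpha$ strictly monotone and $-\dot\alpha^2+(f\circ\alpha)^2v_\beta^2\le0$ a.e. ($v_\beta$ the metric derivative of $\beta$), future directed if $\dot\alpha>0$ a.e.; $y\le y'$ iff $y=y'$ or there is a future directed causal curve from $y$ to $y'$. Causal diamonds: $J(p,q)=\{r: p\le r\le q\}$. Global hyperbolicity (for Lorentzian pre-length spaces, in the sense of Kunzinger–Sämann): the space is non-totally imprisoning (for every compact set $K$ there is $C>0$ such that the $D$-length of every causal curve contained in $K$ is at most $C$) and $J(p,q)$ is compact for all $p,q$. *)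

theory Defs
  imports "HOL-Analysis.Analysis"
begin

definition curve_length :: "('b \<Rightarrow> 'b \<Rightarrow> real) \<Rightarrow> (real \<Rightarrow> 'b) \<Rightarrow> real \<Rightarrow> real \<Rightarrow> ereal" where
  "curve_length dd g a b =
     (SUP P \<in> {(n, t). t 0 = a \<and> t n = b \<and> (\<forall>i<n. t i \<le> t (Suc i))}.
        ereal (\<Sum>i<fst P. dd (g (snd P i)) (g (snd P (Suc i)))))"

definition abs_cont_metric :: "('b \<Rightarrow> 'b \<Rightarrow> real) \<Rightarrow> (real \<Rightarrow> 'b) \<Rightarrow> real \<Rightarrow> real \<Rightarrow> bool" where
  "abs_cont_metric dd g a b \<longleftrightarrow>
     (\<forall>\<epsilon>>0. \<exists>\<delta>>0. \<forall>(n::nat) (s::nat \<Rightarrow> real) (t::nat \<Rightarrow> real).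
        (\<forall>i<n. a \<le> s i \<and> s i \<le> t i \<and> t i \<le> b) \<and>
        (\<forall>i<n. \<forall>j<n. i \<noteq> j \<longrightarrow> t i \<le> s j \<or> t j \<le> s i) \<and>
        (\<Sum>i<n. t i - s i) < \<delta>
        \<longrightarrow> (\<Sum>i<n. dd (g (s i)) (g (t i))) < \<epsilon>)"

definition has_metric_derivative :: "(real \<Rightarrow> 'a::metric_space) \<Rightarrow> real \<Rightarrow> real \<Rightarrow> bool" where
  "has_metric_derivative \<beta> v t \<longleftrightarrow>
     ((\<lambda>s. dist (\<beta> s) (\<beta> t) / \<bar>s - t\<bar>) \<longlongrightarrow> v) (at t)"

definition proper_metric_space :: "'a::metric_space itself \<Rightarrow> bool" where
  "proper_metric_space _ \<longleftrightarrow> (\<forall>(x::'a) r. compact (cball x r))"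

definition length_space :: "'a::metric_space itself \<Rightarrow> bool" where
  "length_space _ \<longleftrightarrow> (\<forall>x y::'a. ereal (dist x y) =
      (INF \<gamma> \<in> {\<gamma>. continuous_on {0..1} \<gamma> \<and> \<gamma> 0 = x \<and> \<gamma> 1 = y}. curve_length dist \<gamma> 0 1))"

definition geodesic_space :: "'a::metric_space itself \<Rightarrow> bool" where
  "geodesic_space _ \<longleftrightarrow> (\<forall>x y::'a. \<exists>\<gamma>. continuous_on {0..1} \<gamma> \<and> \<gamma> 0 = x \<and> \<gamma> 1 = y \<and>
      curve_length dist \<gamma> 0 1 = ereal (dist x y))"

definition cone_space :: "real set \<Rightarrow> (real \<times> 'a) set" where
  "cone_space I = I \<times> UNIV"

definition cone_dist :: "real \<times> 'a::metric_space \<Rightarrow> real \<times> 'a \<Rightarrow> real" where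
  "cone_dist y y' = \<bar>fst y - fst y'\<bar> + dist (snd y) (snd y')"

definition causal_curve :: "real set \<Rightarrow> (real \<Rightarrow> real) \<Rightarrow> (real \<Rightarrow> real \<times> 'a::metric_space) \<Rightarrow> real \<Rightarrow> real \<Rightarrow> bool" where
  "causal_curve I f \<gamma> a b \<longleftrightarrow>
     a < b \<and> \<gamma> ` {a..b} \<subseteq> cone_space I \<and>
     abs_cont_metric cone_dist \<gamma> a b \<and>
     (strict_mono_on {a..b} (fst \<circ> \<gamma>) \<or> strict_mono_on {a..b} (\<lambda>t. - fst (\<gamma> t))) \<and>
     (AE t in lebesgue. t \<in> {a..b} \<longrightarrow>
        (\<exists>da v. ((fst \<circ> \<gamma>) has_real_derivative da) (at t) \<and>
               has_metric_derivative (snd \<circ> \<gamma>) v t \<and>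
               - (da\<^sup>2) + (f (fst (\<gamma> t)))\<^sup>2 * v\<^sup>2 \<le> 0))"

definition future_directed :: "(real \<Rightarrow> real \<times> 'a) \<Rightarrow> real \<Rightarrow> real \<Rightarrow> bool" where
  "future_directed \<gamma> a b \<longleftrightarrow>
     (AE t in lebesgue. t \<in> {a..b} \<longrightarrow>
        (\<exists>da. ((fst \<circ> \<gamma>) has_real_derivative da) (at t) \<and> da > 0))"

definition causal_le :: "real set \<Rightarrow> (real \<Rightarrow> real) \<Rightarrow> real \<times> 'a::metric_space \<Rightarrow> real \<times> 'a \<Rightarrow> bool" where
  "causal_le I f y y' \<longleftrightarrow>
     (y \<in> cone_space I \<and> y = y') \<or>
     (\<exists>\<gamma> a b. causal_curve I f \<gamma> a b \<and> future_directed \<gamma> a b \<and> \<gamma> a = y \<and> \<gamma> b = y')"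

definition causal_diamond :: "real set \<Rightarrow> (real \<Rightarrow> real) \<Rightarrow> real \<times> 'a::metric_space \<Rightarrow> real \<times> 'a \<Rightarrow> (real \<times> 'a) set" where
  "causal_diamond I f p q = {r. causal_le I f p r \<and> causal_le I f r q}"

definition cone_topology :: "real set \<Rightarrow> (real \<times> 'a::metric_space) topology" where
  "cone_topology I = Metric_space.mtopology (cone_space I) cone_dist"

definition non_totally_imprisoning :: "real set \<Rightarrow> (real \<Rightarrow> real) \<Rightarrow> 'a::metric_space itself \<Rightarrow> bool" where
  "non_totally_imprisoning I f _ \<longleftrightarrow>
     (\<forall>K::(real \<times> 'a) set. compactin (cone_topology I) K \<longrightarrow>
        (\<exists>C>0. \<forall>\<gamma> a b. causal_curve I f \<gamma> a b \<and> \<gamma> ` {a..b} \<subseteq> K \<longrightarrow>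
                 curve_length cone_dist \<gamma> a b \<le> ereal C))"

definition globally_hyperbolic :: "real set \<Rightarrow> (real \<Rightarrow> real) \<Rightarrow> 'a::metric_space itself \<Rightarrow> bool" where
  "globally_hyperbolic I f X \<longleftrightarrow>
     non_totally_imprisoning I f X \<and>
     (\<forall>p q::real \<times> 'a. p \<in> cone_space I \<and> q \<in> cone_space I \<longrightarrow>
        compactin (cone_topology I) (causal_diamond I f p q))"

end

theory Submission
  imports Defs
begin

lemma abs_cont_metricD:
  assumes "abs_cont_metric dd g a b" "\<epsilon> > 0"
  obtains \<delta> where "\<delta> > 0" "\<And>(n::nat) (s::nat \<Rightarrow> real) (t::nat \<Rightarrow> real).
        (\<forall>i<n. a \<le> s i \<and> s i \<le> t i \<and> t i \<le> b) \<and>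
        (\<forall>i<n. \<forall>j<n. i \<noteq> j \<longrightarrow> t i \<le> s j \<or> t j \<le> s i) \<and>
        (\<Sum>i<n. t i - s i) < \<delta>
        \<Longrightarrow> (\<Sum>i<n. dd (g (s i)) (g (t i))) < \<epsilon>"
proof -
  from assms(1) have "\<forall>\<epsilon>>0. \<exists>\<delta>>0. \<forall>(n::nat) (s::nat \<Rightarrow> real) (t::nat \<Rightarrow> real).
        (\<forall>i<n. a \<le> s i \<and> s i \<le> t i \<and> t i \<le> b) \<and>
        (\<forall>i<n. \<forall>j<n. i \<noteq> j \<longrightarrow> t i \<le> s j \<or> t j \<le> s i) \<and>
        (\<Sum>i<n. t i - s i) < \<delta>
        \<longrightarrow> (\<Sum>i<n. dd (g (s i)) (g (t i))) < \<epsilon>" unfolding abs_cont_metric_def .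
  from spec[OF this, of \<epsilon>] assms(2) have "\<exists>\<delta>>0. \<forall>(n::nat) (s::nat \<Rightarrow> real) (t::nat \<Rightarrow> real).
        (\<forall>i<n. a \<le> s i \<and> s i \<le> t i \<and> t i \<le> b) \<and>
        (\<forall>i<n. \<forall>j<n. i \<noteq> j \<longrightarrow> t i \<le> s j \<or> t j \<le> s i) \<and>
        (\<Sum>i<n. t i - s i) < \<delta>
        \<longrightarrow> (\<Sum>i<n. dd (g (s i)) (g (t i))) < \<epsilon>" by (rule mp)
  then obtain \<delta> where "\<delta> > 0" and H: "\<forall>(n::nat) (s::nat \<Rightarrow> real) (t::nat \<Rightarrow> real).
        (\<forall>i<n. a \<le> s i \<and> s i \<le> t i \<and> t i \<le> b) \<and>
        (\<forall>i<n. \<forall>j<n. i \<noteq> j \<longrightarrow> t i \<le> s j \<or> t j \<le> s i) \<and>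
        (\<Sum>i<n. t i - s i) < \<delta>
        \<longrightarrow> (\<Sum>i<n. dd (g (s i)) (g (t i))) < \<epsilon>" by (elim exE conjE)
  show thesis
  proof (rule that[OF \<open>\<delta> > 0\<close>])
    fix n :: nat and s t :: "nat \<Rightarrow> real" show "(\<forall>i<n. a \<le> s i \<and> s i \<le> t i \<and> t i \<le> b) \<and>
        (\<forall>i<n. \<forall>j<n. i \<noteq> j \<longrightarrow> t i \<le> s j \<or> t j \<le> s i) \<and>
        (\<Sum>i<n. t i - s i) < \<delta>
        \<Longrightarrow> (\<Sum>i<n. dd (g (s i)) (g (t i))) < \<epsilon>"
      by (rule mp[OF spec[OF spec[OF spec[OF H, of n], of s], of t]])
  qed
qed

lemma ac_transfer:
  assumes ac: "abs_cont_metric dd \<gamma> aa bb" and L: "L \<ge> 0" and sub: "aa \<le> a" "b \<le> bb"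
    and le: "\<And>u w. u \<in> {a..b} \<Longrightarrow> w \<in> {a..b} \<Longrightarrow> ee (h u) (h w) \<le> L * dd (\<gamma> u) (\<gamma> w)"
  shows "abs_cont_metric ee h a b"
  unfolding abs_cont_metric_def
proof (intro allI impI)
  fix \<epsilon> :: real assume "\<epsilon> > 0"
  then have "\<epsilon>/(L+1) > 0" using L by simp
  then obtain \<delta> where "\<delta> > 0" and AC: "\<And>(n::nat) (s::nat \<Rightarrow> real) (t::nat \<Rightarrow> real).
        (\<forall>i<n. aa \<le> s i \<and> s i \<le> t i \<and> t i \<le> bb) \<and>
        (\<forall>i<n. \<forall>j<n. i \<noteq> j \<longrightarrow> t i \<le> s j \<or> t j \<le> s i) \<and>
        (\<Sum>i<n. t i - s i) < \<delta>
        \<Longrightarrow> (\<Sum>i<n. dd (\<gamma> (s i)) (\<gamma> (t i))) < \<epsilon>/(L+1)"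
    using abs_cont_metricD[OF ac] by blast
  have "\<forall>(n::nat) (s::nat \<Rightarrow> real) (t::nat \<Rightarrow> real). (\<forall>i<n. a \<le> s i \<and> s i \<le> t i \<and> t i \<le> b) \<and>
        (\<forall>i<n. \<forall>j<n. i \<noteq> j \<longrightarrow> t i \<le> s j \<or> t j \<le> s i) \<and>
        (\<Sum>i<n. t i - s i) < \<delta> \<longrightarrow> (\<Sum>i<n. ee (h (s i)) (h (t i))) < \<epsilon>"
  proof (intro allI impI)
    fix n :: nat and s t :: "nat \<Rightarrow> real" assume H: "(\<forall>i<n. a \<le> s i \<and> s i \<le> t i \<and> t i \<le> b) \<and>
        (\<forall>i<n. \<forall>j<n. i \<noteq> j \<longrightarrow> t i \<le> s j \<or> t j \<le> s i) \<and> (\<Sum>i<n. t i - s i) < \<delta>"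
    then have "(\<forall>i<n. aa \<le> s i \<and> s i \<le> t i \<and> t i \<le> bb) \<and>
        (\<forall>i<n. \<forall>j<n. i \<noteq> j \<longrightarrow> t i \<le> s j \<or> t j \<le> s i) \<and> (\<Sum>i<n. t i - s i) < \<delta>"
      using sub by (meson order_trans)
    then have s1: "(\<Sum>i<n. dd (\<gamma> (s i)) (\<gamma> (t i))) < \<epsilon>/(L+1)" by (rule AC)
    have "(\<Sum>i<n. ee (h (s i)) (h (t i))) \<le> (\<Sum>i<n. L * dd (\<gamma> (s i)) (\<gamma> (t i)))"
      using H by (intro sum_mono le) auto
    also have "\<dots> = L * (\<Sum>i<n. dd (\<gamma> (s i)) (\<gamma> (t i)))" by (simp add: sum_distrib_left)
    also have "\<dots> \<le> L * (\<epsilon>/(L+1))" using s1 L by (intro mult_left_mono) auto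
    also have "\<dots> < \<epsilon>" using L \<open>\<epsilon> > 0\<close> by (simp add: field_simps)
    finally show "(\<Sum>i<n. ee (h (s i)) (h (t i))) < \<epsilon>" .
  qed
  then show "\<exists>\<delta>>0. \<forall>(n::nat) (s::nat \<Rightarrow> real) (t::nat \<Rightarrow> real). (\<forall>i<n. a \<le> s i \<and> s i \<le> t i \<and> t i \<le> b) \<and>
        (\<forall>i<n. \<forall>j<n. i \<noteq> j \<longrightarrow> t i \<le> s j \<or> t j \<le> s i) \<and>
        (\<Sum>i<n. t i - s i) < \<delta> \<longrightarrow> (\<Sum>i<n. ee (h (s i)) (h (t i))) < \<epsilon>" using \<open>\<delta> > 0\<close> by blast
qed

lemma dist_le_cone_dist: "dist (snd y) (snd y') \<le> cone_dist y y'"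
  unfolding cone_dist_def by simp

lemma key_dini:
  fixes \<beta> :: "real \<Rightarrow> 'a::metric_space" and \<phi> :: "real \<Rightarrow> real"
  assumes md: "has_metric_derivative \<beta> v t" and D: "(\<phi> has_real_derivative D) (at t)"
    and vD: "v \<le> D" and e: "e > 0"
  shows "eventually (\<lambda>u. (dist z (\<beta> u) - \<phi> u) - (dist z (\<beta> t) - \<phi> t) \<le> e*(u-t)) (at_right t)"
proof -
  have "((\<lambda>s. dist (\<beta> s) (\<beta> t) / \<bar>s - t\<bar>) \<longlongrightarrow> v) (at t)"
    using md unfolding has_metric_derivative_def .
  then have e1: "eventually (\<lambda>s. dist (\<beta> s) (\<beta> t) / \<bar>s - t\<bar> < v + e/2) (at t)"
    using e by (intro order_tendstoD(2)) auto
  have "((\<lambda>s. (\<phi> s - \<phi> t) / (s - t)) \<longlongrightarrow> D) (at t)"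
    using D by (simp add: has_field_derivative_iff)
  then have e2: "eventually (\<lambda>s. (\<phi> s - \<phi> t) / (s - t) > D - e/2) (at t)"
    using e by (intro order_tendstoD(1)) auto
  have le: "at_right t \<le> at t" by (simp add: at_le)
  have "eventually (\<lambda>s. dist (\<beta> s) (\<beta> t) / \<bar>s - t\<bar> < v + e/2 \<and> (\<phi> s - \<phi> t) / (s - t) > D - e/2 \<and> s > t) (at_right t)"
    by (intro eventually_conj filter_leD[OF le e1] filter_leD[OF le e2] eventually_at_right_less)
  then show ?thesis
  proof (rule eventually_mono)
    fix u assume H: "dist (\<beta> u) (\<beta> t) / \<bar>u - t\<bar> < v + e/2 \<and> (\<phi> u - \<phi> t) / (u - t) > D - e/2 \<and> u > t"
    then have pos: "u - t > 0" by simp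
    have "dist (\<beta> u) (\<beta> t) / (u - t) < v + e/2" using H pos by (simp add: abs_of_pos)
    then have 1: "dist (\<beta> u) (\<beta> t) < (v + e/2) * (u - t)"
      by (simp only: pos_divide_less_eq[OF pos])
    have "D - e/2 < (\<phi> u - \<phi> t) / (u - t)" using H by simp
    then have 2: "\<phi> u - \<phi> t > (D - e/2) * (u - t)"
      by (simp only: pos_less_divide_eq[OF pos])
    have 3: "dist z (\<beta> u) \<le> dist z (\<beta> t) + dist (\<beta> u) (\<beta> t)"
      by (rule dist_triangle2)
    have "(v + e/2) * (u - t) - (D - e/2) * (u - t) = (v - D) * (u-t) + e * (u - t)"
      by (simp add: algebra_simps)
    moreover have "(v - D) * (u-t) \<le> 0" using vD pos by (intro mult_nonpos_nonneg) auto
    ultimately show "(dist z (\<beta> u) - \<phi> u) - (dist z (\<beta> t) - \<phi> t) \<le> e*(u-t)"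
      using 1 2 3 by linarith
  qed
qed

lemma core_monotone:
  fixes g :: "real \<Rightarrow> real"
  assumes ab: "a \<le> b" and ac: "abs_cont_metric dist g a b"
    and N: "N \<in> null_sets lebesgue"
    and dini: "\<And>t e. t \<in> {a..b} \<Longrightarrow> t \<notin> N \<Longrightarrow> e > 0 \<Longrightarrow>
                 eventually (\<lambda>u. g u - g t \<le> e*(u-t)) (at_right t)"
  shows "g b \<le> g a"
proof -
  have main: "g b \<le> g a + \<eta>*(b-a) + \<epsilon>" if "\<eta> > 0" "\<epsilon> > 0" for \<eta> \<epsilon>
  proof -
    obtain \<delta> where "\<delta> > 0" and AC: "\<And>(n::nat) (s::nat \<Rightarrow> real) (t::nat \<Rightarrow> real).
        (\<forall>i<n. a \<le> s i \<and> s i \<le> t i \<and> t i \<le> b) \<and>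
        (\<forall>i<n. \<forall>j<n. i \<noteq> j \<longrightarrow> t i \<le> s j \<or> t j \<le> s i) \<and>
        (\<Sum>i<n. t i - s i) < \<delta>
        \<Longrightarrow> (\<Sum>i<n. dist (g (s i)) (g (t i))) < \<epsilon>"
      using abs_cont_metricD[OF ac \<open>\<epsilon> > 0\<close>] by blast
    have Nl: "N \<in> sets lebesgue" using N by auto
    obtain U where U: "open U" "N \<subseteq> U" "(U - N) \<in> lmeasurable" "emeasure lebesgue (U - N) < ennreal \<delta>"
      using sets_lebesgue_outer_open[OF Nl \<open>\<delta> > 0\<close>] by blast
    have Nf: "N \<in> lmeasurable" using N by (simp add: fmeasurableI_null_sets)
    have UU: "U = (U - N) \<union> N" using U(2) by blast
    have Uf: "U \<in> lmeasurable" using U(3) Nf UU by (metis fmeasurable.Un)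
    have "measure lebesgue (U - N) < \<delta>"
      using U(3,4) by (metis emeasure_eq_measure2 ennreal_less_iff measure_nonneg)
    moreover have "measure lebesgue U \<le> measure lebesgue (U - N) + measure lebesgue N"
      using UU U(3) Nf by (metis measure_Un_le fmeasurableD)
    moreover have "measure lebesgue N = 0" using N by (simp add: measure_eq_0_null_sets)
    ultimately have mU: "measure lebesgue U < \<delta>" by linarith
    define P where "P s (n::nat) (ss::nat \<Rightarrow> real) (tt::nat \<Rightarrow> real) \<longleftrightarrow> (\<forall>i<n. a \<le> ss i \<and> ss i \<le> tt i \<and> tt i \<le> s \<and> {ss i..tt i} \<subseteq> U) \<and>
        (\<forall>i<n. \<forall>j<n. i \<noteq> j \<longrightarrow> tt i \<le> ss j \<or> tt j \<le> ss i)" for s n ss tt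
    define W where "W s = {(\<Sum>i<n. \<bar>g (ss i) - g (tt i)\<bar>) | n ss tt. P s n ss tt}" for s
    define V where "V s = Sup (W s)" for s
    have bnd: "(\<Sum>i<n. \<bar>g (ss i) - g (tt i)\<bar>) < \<epsilon>" if "s \<le> b" "P s n ss tt" for s n ss tt
    proof -
      have neg: "negligible ({ss i..tt i} \<inter> {ss j..tt j})" if "i < n" "j < n" "i \<noteq> j" for i j
      proof -
        from \<open>P s n ss tt\<close> that have "tt i \<le> ss j \<or> tt j \<le> ss i" unfolding P_def by blast
        then have "{ss i..tt i} \<inter> {ss j..tt j} \<subseteq> {tt i, tt j}" by auto
        then show ?thesis by (meson negligible_insert negligible_sing negligible_subset)
      qed
      have "measure lebesgue (\<Union>i\<in>{..<n}. {ss i..tt i}) = (\<Sum>i<n. measure lebesgue {ss i..tt i})"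
      proof (rule measure_negligible_finite_Union_image)
        show "pairwise (\<lambda>i j. negligible ({ss i..tt i} \<inter> {ss j..tt j})) {..<n}"
          unfolding pairwise_def using neg by blast
      qed auto
      also have "\<dots> = (\<Sum>i<n. tt i - ss i)"
        using \<open>P s n ss tt\<close> unfolding P_def by (intro sum.cong) auto
      finally have e1: "measure lebesgue (\<Union>i\<in>{..<n}. {ss i..tt i}) = (\<Sum>i<n. tt i - ss i)" .
      have "(\<Union>i\<in>{..<n}. {ss i..tt i}) \<subseteq> U" using \<open>P s n ss tt\<close> unfolding P_def by auto
      then have "measure lebesgue (\<Union>i\<in>{..<n}. {ss i..tt i}) \<le> measure lebesgue U"
        by (intro measure_mono_fmeasurable Uf) auto
      with e1 mU have "(\<Sum>i<n. tt i - ss i) < \<delta>" by linarith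
      moreover have "\<forall>i<n. a \<le> ss i \<and> ss i \<le> tt i \<and> tt i \<le> b"
        using \<open>P s n ss tt\<close> \<open>s \<le> b\<close> unfolding P_def by force
      moreover have "\<forall>i<n. \<forall>j<n. i \<noteq> j \<longrightarrow> tt i \<le> ss j \<or> tt j \<le> ss i"
        using \<open>P s n ss tt\<close> unfolding P_def by blast
      ultimately have "(\<Sum>i<n. dist (g (ss i)) (g (tt i))) < \<epsilon>" using AC by blast
      then show ?thesis by (simp add: dist_real_def)
    qed
    have P0: "P s 0 ss tt" for s ss tt unfolding P_def by simp
    have W0: "0 \<in> W s" for s unfolding W_def using P0 by force
    have Wne: "W s \<noteq> {}" for s using W0 by blast
    have Wbdd: "bdd_above (W s)" if "s \<le> b" for s
      unfolding W_def bdd_above_def using bnd[OF that] by (auto intro!: exI[of _ \<epsilon>] less_imp_le)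
    have V0: "0 \<le> V s" if "s \<le> b" for s unfolding V_def using W0 Wbdd[OF that] by (rule cSup_upper)
    have Vle: "V s \<le> \<epsilon>" if "s \<le> b" for s unfolding V_def
      using Wne by (rule cSup_least) (auto simp: W_def intro: less_imp_le bnd[OF that])
    have Vmono: "V s \<le> V s'" if "s \<le> s'" "s' \<le> b" for s s'
    proof -
      have "W s \<subseteq> W s'"
      proof
        fix x assume "x \<in> W s"
        then obtain n ss tt where x: "x = (\<Sum>i<n. \<bar>g (ss i) - g (tt i)\<bar>)" and p: "P s n ss tt"
          unfolding W_def by blast
        have "P s' n ss tt" using p that(1) unfolding P_def by (meson order_trans)
        then show "x \<in> W s'" unfolding W_def using x by blast
      qed
      then show ?thesis unfolding V_def using Wne Wbdd[OF that(2)] by (intro cSup_subset_mono) auto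
    qed
    have Vext: "V s + \<bar>g u - g s\<bar> \<le> V u" if that': "a \<le> s" "s \<le> u" "u \<le> b" "{s..u} \<subseteq> U" for s u
    proof -
      have "x \<le> V u - \<bar>g u - g s\<bar>" if "x \<in> W s" for x
      proof -
        from that obtain n ss tt where x: "x = (\<Sum>i<n. \<bar>g (ss i) - g (tt i)\<bar>)" and p: "P s n ss tt"
          unfolding W_def by blast
        define ss' where "ss' = ss(n := s)"
        define tt' where "tt' = tt(n := u)"
        have A1: "\<forall>i<Suc n. a \<le> ss' i \<and> ss' i \<le> tt' i \<and> tt' i \<le> u \<and> {ss' i..tt' i} \<subseteq> U"
        proof (intro allI impI)
          fix i assume "i < Suc n"
          show "a \<le> ss' i \<and> ss' i \<le> tt' i \<and> tt' i \<le> u \<and> {ss' i..tt' i} \<subseteq> U"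
          proof (cases "i = n")
            case True then show ?thesis using that' unfolding ss'_def tt'_def by simp
          next
            case False
            then have "i < n" using \<open>i < Suc n\<close> by simp
            then have "a \<le> ss i \<and> ss i \<le> tt i \<and> tt i \<le> s \<and> {ss i..tt i} \<subseteq> U" using p unfolding P_def by blast
            then show ?thesis using False \<open>s \<le> u\<close> unfolding ss'_def tt'_def by simp
          qed
        qed
        have A2: "\<forall>i<Suc n. \<forall>j<Suc n. i \<noteq> j \<longrightarrow> tt' i \<le> ss' j \<or> tt' j \<le> ss' i"
        proof (intro allI impI)
          fix i j assume ij: "i < Suc n" "j < Suc n" "i \<noteq> j"
          show "tt' i \<le> ss' j \<or> tt' j \<le> ss' i"
          proof (cases "i = n")
            case True
            then have "j < n" using ij by simp
            then have "tt j \<le> s" using p unfolding P_def by blast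
            then show ?thesis using True ij unfolding ss'_def tt'_def by simp
          next
            case False
            then have i: "i < n" using ij by simp
            show ?thesis
            proof (cases "j = n")
              case True
              have "tt i \<le> s" using p i unfolding P_def by blast
              then show ?thesis using True ij unfolding ss'_def tt'_def by simp
            next
              case False
              then have "j < n" using ij by simp
              then have "tt i \<le> ss j \<or> tt j \<le> ss i" using p i ij(3) unfolding P_def by blast
              then show ?thesis using False \<open>i \<noteq> n\<close> unfolding ss'_def tt'_def by simp
            qed
          qed
        qed
        have P': "P u (Suc n) ss' tt'" unfolding P_def using A1 A2 by blast
        have sumeq: "(\<Sum>i<Suc n. \<bar>g (ss' i) - g (tt' i)\<bar>) = x + \<bar>g u - g s\<bar>"
        proof -
          have "(\<Sum>i<n. \<bar>g (ss' i) - g (tt' i)\<bar>) = (\<Sum>i<n. \<bar>g (ss i) - g (tt i)\<bar>)"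
            unfolding ss'_def tt'_def by (intro sum.cong) auto
          then show ?thesis unfolding x by (simp add: ss'_def tt'_def abs_minus_commute)
        qed
        have "x + \<bar>g u - g s\<bar> \<in> W u" unfolding W_def mem_Collect_eq
          by (intro exI[of _ "Suc n"] exI[of _ ss'] exI[of _ tt'] conjI P' sumeq[symmetric])
        then have "x + \<bar>g u - g s\<bar> \<le> V u" unfolding V_def using Wbdd[OF \<open>u \<le> b\<close>] by (rule cSup_upper)
        then show ?thesis by linarith
      qed
      then have "V s \<le> V u - \<bar>g u - g s\<bar>" unfolding V_def using Wne by (intro cSup_least) auto
      then show ?thesis by linarith
    qed
    have cont: "\<exists>d>0. \<forall>u\<in>{a..b}. \<bar>u - s\<bar> < d \<longrightarrow> \<bar>g u - g s\<bar> < e" if "s \<in> {a..b}" "e > 0" for s e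
    proof -
      obtain d where "d > 0" and AC1: "\<And>(n::nat) (ss::nat \<Rightarrow> real) (tt::nat \<Rightarrow> real).
        (\<forall>i<n. a \<le> ss i \<and> ss i \<le> tt i \<and> tt i \<le> b) \<and>
        (\<forall>i<n. \<forall>j<n. i \<noteq> j \<longrightarrow> tt i \<le> ss j \<or> tt j \<le> ss i) \<and>
        (\<Sum>i<n. tt i - ss i) < d
        \<Longrightarrow> (\<Sum>i<n. dist (g (ss i)) (g (tt i))) < e"
        using abs_cont_metricD[OF ac \<open>e > 0\<close>] by blast
      have "\<bar>g u - g s\<bar> < e" if "u \<in> {a..b}" "\<bar>u - s\<bar> < d" for u
      proof -
        have m: "min u s \<le> max u s" "max u s - min u s < d"
          using that(2) unfolding min_def max_def by (auto simp: abs_if split: if_splits)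
        have "dist (g ((\<lambda>_. min u s) 0)) (g ((\<lambda>_. max u s) 0)) < e"
          using AC1[of 1 "\<lambda>_. min u s" "\<lambda>_. max u s"] that \<open>s \<in> {a..b}\<close> m by auto
        then show ?thesis by (cases "u \<le> s") (auto simp: dist_real_def abs_minus_commute min_def max_def)
      qed
      then show ?thesis using \<open>d > 0\<close> by blast
    qed
    define S where "S s \<longleftrightarrow> g s \<le> g a + \<eta>*(s-a) + V s" for s
    define A where "A = {s\<in>{a..b}. \<forall>u\<in>{a..s}. S u}"
    have Sa: "S a" unfolding S_def using V0[OF ab] by simp
    have aA: "a \<in> A" unfolding A_def using Sa ab by auto
    have Abdd: "bdd_above A" unfolding A_def by (auto intro!: bdd_aboveI[of _ b])
    define s where "s = Sup A"
    have as: "a \<le> s" unfolding s_def using aA Abdd by (rule cSup_upper)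
    have sb: "s \<le> b" unfolding s_def using aA by (intro cSup_least) (auto simp: A_def)
    have below: "S u" if "a \<le> u" "u < s" for u
    proof -
      have ne: "A \<noteq> {}" using aA by auto
      have "\<exists>x\<in>A. u < x" using that(2) less_cSup_iff[OF ne Abdd, of u] unfolding s_def by blast
      then obtain x where "x \<in> A" "u < x" by blast
      then show ?thesis unfolding A_def using that by auto
    qed
    have Ss: "S s"
    proof (cases "s = a")
      case True then show ?thesis using Sa by simp
    next
      case False
      then have "a < s" using as by simp
      have "g s \<le> (g a + \<eta>*(s-a) + V s) + e" if "e > 0" for e
      proof -
        obtain d where "d > 0" and d: "\<forall>u\<in>{a..b}. \<bar>u - s\<bar> < d \<longrightarrow> \<bar>g u - g s\<bar> < e"
          using cont[of s e] as sb \<open>e > 0\<close> by auto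
        define u where "u = max a (s - d/2)"
        have u: "a \<le> u" "u < s" "\<bar>u - s\<bar> < d" using \<open>d > 0\<close> \<open>a < s\<close> unfolding u_def by auto
        then have "\<bar>g u - g s\<bar> < e" using d sb by auto
        moreover have "S u" using below u by auto
        moreover have "V u \<le> V s" using Vmono u sb by auto
        moreover have "\<eta>*(u-a) \<le> \<eta>*(s-a)" using u \<open>\<eta> > 0\<close> by (intro mult_left_mono) auto
        ultimately show ?thesis unfolding S_def by (simp add: abs_less_iff)
      qed
      then show ?thesis unfolding S_def by (rule field_le_epsilon)
    qed
    have "\<forall>u\<in>{a..s}. S u"
    proof
      fix u assume u: "u \<in> {a..s}"
      show "S u"
      proof (cases "u = s")
        case True then show ?thesis using Ss by simp
      next
        case False then show ?thesis using below u by auto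
      qed
    qed
    then have sA: "s \<in> A" unfolding A_def using as sb by auto
    have "s = b"
    proof (rule ccontr)
      assume "s \<noteq> b"
      then have "s < b" using sb by simp
      have "\<exists>u. s < u \<and> u \<le> b \<and> (\<forall>w. s < w \<and> w \<le> u \<longrightarrow> S w)"
      proof (cases "s \<in> N")
        case False
        have "eventually (\<lambda>u. g u - g s \<le> \<eta>*(u-s)) (at_right s)"
          using dini[of s \<eta>] False as sb \<open>\<eta> > 0\<close> by auto
        then obtain b' where "b' > s" and b': "\<And>w. s < w \<Longrightarrow> w < b' \<Longrightarrow> g w - g s \<le> \<eta>*(w-s)"
          using \<open>s < b\<close> by (auto simp: eventually_at_right[OF \<open>s < b\<close>])
        define u where "u = min b ((s + b')/2)"
        have "S w" if "s < w" "w \<le> u" for w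
        proof -
          have "w < b'" "w \<le> b" using that \<open>b' > s\<close> unfolding u_def by auto
          then have "g w - g s \<le> \<eta>*(w-s)" using b' that by auto
          moreover have "V s \<le> V w" using Vmono that \<open>w \<le> b\<close> by auto
          moreover have "\<eta>*(w-s) + \<eta>*(s-a) = \<eta>*(w-a)" by (simp add: algebra_simps)
          ultimately show ?thesis using Ss unfolding S_def by linarith
        qed
        moreover have "s < u" "u \<le> b" using \<open>s < b\<close> \<open>b' > s\<close> unfolding u_def by auto
        ultimately show ?thesis by blast
      next
        case True
        then have "s \<in> U" using U(2) by auto
        then obtain r where "r > 0" and r: "ball s r \<subseteq> U" using U(1) open_contains_ball by blast
        define u where "u = min b (s + r/2)"
        have "S w" if "s < w" "w \<le> u" for w
        proof -
          have "w \<le> b" "w < s + r" using that \<open>r > 0\<close> unfolding u_def by auto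
          then have "{s..w} \<subseteq> U" using r by (auto simp: dist_real_def subset_iff)
          then have "V s + \<bar>g w - g s\<bar> \<le> V w" using Vext as that \<open>w \<le> b\<close> by auto
          moreover have "\<eta>*(s-a) \<le> \<eta>*(w-a)" using that \<open>\<eta> > 0\<close> by auto
          moreover have "g w - g s \<le> \<bar>g w - g s\<bar>" by simp
          ultimately show ?thesis using Ss unfolding S_def by linarith
        qed
        moreover have "s < u" "u \<le> b" using \<open>s < b\<close> \<open>r > 0\<close> unfolding u_def by auto
        ultimately show ?thesis by blast
      qed
      then obtain u where u: "s < u" "u \<le> b" "\<And>w. s < w \<Longrightarrow> w \<le> u \<Longrightarrow> S w" by blast
      have "\<forall>w\<in>{a..u}. S w"
      proof
        fix w assume w: "w \<in> {a..u}"
        show "S w"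
        proof (cases "w \<le> s")
          case True then show ?thesis using sA w unfolding A_def by auto
        next
          case False then show ?thesis using u(3)[of w] w by auto
        qed
      qed
      then have "u \<in> A" unfolding A_def using u as by auto
      then have "u \<le> s" unfolding s_def using Abdd by (rule cSup_upper)
      then show False using u by simp
    qed
    then have "S b" using Ss by simp
    then show ?thesis unfolding S_def using Vle[of b] by simp
  qed
  show ?thesis
  proof (rule field_le_epsilon)
    fix e :: real assume "e > 0"
    define \<eta> where "\<eta> = e / (2*(b - a + 1))"
    have "\<eta> > 0" using \<open>e > 0\<close> ab unfolding \<eta>_def by auto
    have "\<eta>*(b-a) \<le> e/2" unfolding \<eta>_def using ab \<open>e>0\<close> by (simp add: field_simps)
    with main[OF \<open>\<eta> > 0\<close>, of "e/2"] \<open>e > 0\<close> show "g b \<le> g a + e" by linarith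
  qed
qed

lemma abs_dist_diff_le: "\<bar>dist x y - dist x z\<bar> \<le> dist y z"
proof -
  have "dist x y \<le> dist x z + dist y z" by (rule dist_triangle2)
  moreover have "dist x z \<le> dist x y + dist z y" by (rule dist_triangle2)
  moreover have "dist z y = dist y z" by (rule dist_commute)
  ultimately show ?thesis by linarith
qed

lemma key_bound:
  fixes \<gamma> :: "real \<Rightarrow> real \<times> 'a::metric_space" and \<phi> :: "real \<Rightarrow> real"
  assumes ab: "a \<le> b" and ac: "abs_cont_metric cone_dist \<gamma> a b" and K: "K \<ge> 0"
    and Lip: "\<And>u w. u \<in> {a..b} \<Longrightarrow> w \<in> {a..b} \<Longrightarrow> \<bar>\<phi> u - \<phi> w\<bar> \<le> K * cone_dist (\<gamma> u) (\<gamma> w)"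
    and AE: "AE t in lebesgue. t \<in> {a..b} \<longrightarrow> (\<exists>v D. has_metric_derivative (snd \<circ> \<gamma>) v t \<and>
               (\<phi> has_real_derivative D) (at t) \<and> v \<le> D)"
  shows "dist (snd (\<gamma> a)) (snd (\<gamma> b)) \<le> \<phi> b - \<phi> a"
proof -
  define h where "h u = dist (snd (\<gamma> a)) (snd (\<gamma> u)) - \<phi> u" for u
  have hac: "abs_cont_metric dist h a b"
  proof (rule ac_transfer[OF ac, of "1 + K"])
    show "0 \<le> 1 + K" using K by simp
    fix u w assume u: "u \<in> {a..b}" and w: "w \<in> {a..b}"
    have 1: "\<bar>dist (snd (\<gamma> a)) (snd (\<gamma> u)) - dist (snd (\<gamma> a)) (snd (\<gamma> w))\<bar> \<le> dist (snd (\<gamma> u)) (snd (\<gamma> w))"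
      by (rule abs_dist_diff_le)
    have 2: "dist (snd (\<gamma> u)) (snd (\<gamma> w)) \<le> cone_dist (\<gamma> u) (\<gamma> w)" by (rule dist_le_cone_dist)
    have 3: "\<bar>\<phi> u - \<phi> w\<bar> \<le> K * cone_dist (\<gamma> u) (\<gamma> w)" using Lip u w .
    have "\<bar>h u - h w\<bar> \<le> \<bar>dist (snd (\<gamma> a)) (snd (\<gamma> u)) - dist (snd (\<gamma> a)) (snd (\<gamma> w))\<bar> + \<bar>\<phi> u - \<phi> w\<bar>"
      unfolding h_def by linarith
    also have "\<dots> \<le> (1 + K) * cone_dist (\<gamma> u) (\<gamma> w)" using 1 2 3 by (simp add: algebra_simps)
    finally show "dist (h u) (h w) \<le> (1 + K) * cone_dist (\<gamma> u) (\<gamma> w)" by (simp add: dist_real_def)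
  qed (auto)
  from AE obtain N where NP: "\<And>t. t \<in> space lebesgue - N \<Longrightarrow> t \<in> {a..b} \<longrightarrow> (\<exists>v D. has_metric_derivative (snd \<circ> \<gamma>) v t \<and>
               (\<phi> has_real_derivative D) (at t) \<and> v \<le> D)" and N: "N \<in> null_sets lebesgue"
    using AE_E3[OF AE] by blast
  have "h b \<le> h a"
  proof (rule core_monotone[OF ab hac N])
    fix t e :: real assume t: "t \<in> {a..b}" "t \<notin> N" "e > 0"
    then have "t \<in> space lebesgue - N" by simp
    then have "\<exists>v D. has_metric_derivative (snd \<circ> \<gamma>) v t \<and> (\<phi> has_real_derivative D) (at t) \<and> v \<le> D"
      using NP t(1) by blast
    then obtain v D where md: "has_metric_derivative (snd \<circ> \<gamma>) v t" and
        Dd: "(\<phi> has_real_derivative D) (at t)" and "v \<le> D" by blast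
    from key_dini[OF md Dd \<open>v \<le> D\<close> \<open>e > 0\<close>, of "snd (\<gamma> a)"]
    show "eventually (\<lambda>u. h u - h t \<le> e*(u-t)) (at_right t)" unfolding h_def by (simp add: o_def)
  qed
  then show ?thesis unfolding h_def by simp
qed

lemma ac_restrict:
  assumes "abs_cont_metric dd g a b" "a \<le> s" "s' \<le> b"
  shows "abs_cont_metric dd g s s'"
  by (rule ac_transfer[OF assms(1), of 1]) (use assms in auto)

lemma negligible_two: "{x, y::real} \<in> null_sets lebesgue"
  by (simp flip: negligible_iff_null_sets)

lemma causal_curveD:
  assumes "causal_curve I f \<gamma> a b"
  shows "a < b" "\<gamma> ` {a..b} \<subseteq> cone_space I" "abs_cont_metric cone_dist \<gamma> a b"
    "strict_mono_on {a..b} (fst \<circ> \<gamma>) \<or> strict_mono_on {a..b} (\<lambda>t. - fst (\<gamma> t))"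
    "AE t in lebesgue. t \<in> {a..b} \<longrightarrow>
        (\<exists>da v. ((fst \<circ> \<gamma>) has_real_derivative da) (at t) \<and>
               has_metric_derivative (snd \<circ> \<gamma>) v t \<and>
               - (da\<^sup>2) + (f (fst (\<gamma> t)))\<^sup>2 * v\<^sup>2 \<le> 0)"
proof -
  note H = assms[unfolded causal_curve_def]
  show "a < b" by (rule conjunct1[OF H])
  show "\<gamma> ` {a..b} \<subseteq> cone_space I" by (rule conjunct1[OF conjunct2[OF H]])
  show "abs_cont_metric cone_dist \<gamma> a b" by (rule conjunct1[OF conjunct2[OF conjunct2[OF H]]])
  show "strict_mono_on {a..b} (fst \<circ> \<gamma>) \<or> strict_mono_on {a..b} (\<lambda>t. - fst (\<gamma> t))"
    by (rule conjunct1[OF conjunct2[OF conjunct2[OF conjunct2[OF H]]]])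
  show "AE t in lebesgue. t \<in> {a..b} \<longrightarrow>
        (\<exists>da v. ((fst \<circ> \<gamma>) has_real_derivative da) (at t) \<and>
               has_metric_derivative (snd \<circ> \<gamma>) v t \<and>
               - (da\<^sup>2) + (f (fst (\<gamma> t)))\<^sup>2 * v\<^sup>2 \<le> 0)"
    by (rule conjunct2[OF conjunct2[OF conjunct2[OF conjunct2[OF H]]]])
qed

lemma causal_bound:
  fixes \<gamma> :: "real \<Rightarrow> real \<times> 'a::metric_space" and \<phi> :: "real \<Rightarrow> real"
  assumes c: "causal_curve I f \<gamma> a b" and s: "a \<le> s" "s \<le> s'" "s' \<le> b" and K: "K \<ge> 0"
    and Lip: "\<And>u w. u \<in> {a..b} \<Longrightarrow> w \<in> {a..b} \<Longrightarrow> \<bar>\<phi> u - \<phi> w\<bar> \<le> K * cone_dist (\<gamma> u) (\<gamma> w)"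
    and der: "\<And>t da v. t \<in> {a<..<b} \<Longrightarrow> ((fst \<circ> \<gamma>) has_real_derivative da) (at t) \<Longrightarrow>
        has_metric_derivative (snd \<circ> \<gamma>) v t \<Longrightarrow> - (da\<^sup>2) + (f (fst (\<gamma> t)))\<^sup>2 * v\<^sup>2 \<le> 0 \<Longrightarrow>
        \<exists>D. (\<phi> has_real_derivative D) (at t) \<and> v \<le> D"
  shows "dist (snd (\<gamma> s)) (snd (\<gamma> s')) \<le> \<phi> s' - \<phi> s"
proof (rule key_bound[OF s(2)])
  show "abs_cont_metric cone_dist \<gamma> s s'"
    using causal_curveD(3)[OF c] s(1,3) by (rule ac_restrict)
  show "K \<ge> 0" by (rule K)
  show "\<bar>\<phi> u - \<phi> w\<bar> \<le> K * cone_dist (\<gamma> u) (\<gamma> w)" if "u \<in> {s..s'}" "w \<in> {s..s'}" for u w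
    using Lip that s by auto
  have AE1: "AE t in lebesgue. t \<in> {a..b} \<longrightarrow>
        (\<exists>da v. ((fst \<circ> \<gamma>) has_real_derivative da) (at t) \<and>
               has_metric_derivative (snd \<circ> \<gamma>) v t \<and>
               - (da\<^sup>2) + (f (fst (\<gamma> t)))\<^sup>2 * v\<^sup>2 \<le> 0)"
    by (rule causal_curveD(5)[OF c])
  have AE2: "AE t in lebesgue. t \<notin> {a, b}" by (rule AE_not_in[OF negligible_two])
  show "AE t in lebesgue. t \<in> {s..s'} \<longrightarrow> (\<exists>v D. has_metric_derivative (snd \<circ> \<gamma>) v t \<and>
               (\<phi> has_real_derivative D) (at t) \<and> v \<le> D)"
    using AE1 AE2
  proof eventually_elim
    case (elim t)
    show ?case
    proof
      assume "t \<in> {s..s'}"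
      then have t: "t \<in> {a<..<b}" using elim(2) s by auto
      then obtain da v where "((fst \<circ> \<gamma>) has_real_derivative da) (at t)" "has_metric_derivative (snd \<circ> \<gamma>) v t"
          "- (da\<^sup>2) + (f (fst (\<gamma> t)))\<^sup>2 * v\<^sup>2 \<le> 0" using elim(1) by auto
      with der[OF t this] show "\<exists>v D. has_metric_derivative (snd \<circ> \<gamma>) v t \<and>
               (\<phi> has_real_derivative D) (at t) \<and> v \<le> D" by blast
    qed
  qed
qed

lemma mono_deriv_nonneg:
  fixes \<alpha> :: "real \<Rightarrow> real"
  assumes m: "strict_mono_on {a..b} \<alpha>" and t: "t \<in> {a<..<b}" and d: "(\<alpha> has_real_derivative da) (at t)"
  shows "da \<ge> 0"
proof (rule ccontr)
  assume "\<not> da \<ge> 0"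
  then have "da < 0" by simp
  from DERIV_neg_dec_right[OF d this] obtain e where "e > 0" and e: "\<And>h. h > 0 \<Longrightarrow> h < e \<Longrightarrow> \<alpha> t > \<alpha> (t + h)"
    by blast
  define h where "h = min (e/2) ((b - t)/2)"
  have "h \<le> (b - t)/2" "h \<le> e/2" unfolding h_def by (rule min.cobounded2, rule min.cobounded1)
  moreover have "h > 0" using t \<open>e > 0\<close> unfolding h_def by auto
  ultimately have h: "h > 0" "h < e" "t + h \<le> b" using t \<open>e > 0\<close> by auto
  have "\<alpha> t < \<alpha> (t + h)" using m t h by (intro strict_mono_onD[OF m]) auto
  with e[OF h(1,2)] show False by simp
qed

lemma anti_deriv_nonpos:
  fixes \<alpha> :: "real \<Rightarrow> real"
  assumes m: "strict_mono_on {a..b} (\<lambda>t. - \<alpha> t)" and t: "t \<in> {a<..<b}" and d: "(\<alpha> has_real_derivative da) (at t)"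
  shows "da \<le> 0"
proof -
  have "((\<lambda>t. - \<alpha> t) has_real_derivative - da) (at t)" using d by (rule DERIV_minus)
  from mono_deriv_nonneg[OF m t this] show ?thesis by simp
qed

lemma metric_deriv_nonneg:
  assumes "has_metric_derivative \<beta> v t" shows "v \<ge> 0"
proof -
  have "((\<lambda>s. dist (\<beta> s) (\<beta> t) / \<bar>s - t\<bar>) \<longlongrightarrow> v) (at t)"
    using assms unfolding has_metric_derivative_def .
  then show ?thesis by (rule tendsto_lowerbound) auto
qed

lemma sq_ineq:
  fixes da v F :: real
  assumes "da \<ge> 0" "v \<ge> 0" "F > 0" "- (da\<^sup>2) + F\<^sup>2 * v\<^sup>2 \<le> 0"
  shows "F * v \<le> da"
proof (rule power2_le_imp_le)
  show "(F * v)\<^sup>2 \<le> da\<^sup>2" using assms(4) by (simp add: power_mult_distrib)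
qed (rule assms(1))

lemma fd_incr:
  assumes c: "causal_curve I f \<gamma> a b" and fd: "future_directed \<gamma> a b"
  shows "strict_mono_on {a..b} (fst \<circ> \<gamma>)"
proof -
  have ab: "a < b" by (rule causal_curveD(1)[OF c])
  have "strict_mono_on {a..b} (fst \<circ> \<gamma>) \<or> strict_mono_on {a..b} (\<lambda>t. - fst (\<gamma> t))"
    by (rule causal_curveD(4)[OF c])
  moreover have False if anti: "strict_mono_on {a..b} (\<lambda>t. - fst (\<gamma> t))"
  proof -
    from fd obtain N where NP: "\<And>t. t \<in> space lebesgue - N \<Longrightarrow> t \<in> {a..b} \<longrightarrow>
        (\<exists>da. ((fst \<circ> \<gamma>) has_real_derivative da) (at t) \<and> da > 0)" and N: "N \<in> null_sets lebesgue"
      using AE_E3[OF fd[unfolded future_directed_def]] by blast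
    have "{a<..<b} \<subseteq> N"
    proof
      fix t assume t: "t \<in> {a<..<b}"
      show "t \<in> N"
      proof (rule ccontr)
        assume "t \<notin> N"
        then have "t \<in> space lebesgue - N" by simp
        then have "\<exists>da. ((fst \<circ> \<gamma>) has_real_derivative da) (at t) \<and> da > 0"
          using NP t by auto
        then obtain da where d: "((fst \<circ> \<gamma>) has_real_derivative da) (at t)" and "da > 0"
          by blast
        have "strict_mono_on {a..b} (\<lambda>t. - (fst \<circ> \<gamma>) t)" using anti by (simp add: o_def)
        from anti_deriv_nonpos[OF this t d] \<open>da > 0\<close> show False by simp
      qed
    qed
    then have "negligible {a<..<b}"
      using N by (metis negligible_iff_null_sets negligible_subset)
    then have "box a b = {}" using negligible_interval(2)[of a b] by simp
    then show False using ab by simp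
  qed
  ultimately show ?thesis by blast
qed

lemma F_exists:
  assumes cont: "continuous_on I f" and pos: "\<forall>t\<in>I. f t > 0" and sub: "{c..d} \<subseteq> I"
  obtains M F where "M \<ge> 0" "\<And>x. x \<in> {c<..<d} \<Longrightarrow> (F has_real_derivative 1 / f x) (at x)"
    "\<And>x y. x \<in> {c..d} \<Longrightarrow> y \<in> {c..d} \<Longrightarrow> \<bar>F x - F y\<bar> \<le> M * \<bar>x - y\<bar>"
    "\<And>x y. x \<in> {c..d} \<Longrightarrow> y \<in> {c..d} \<Longrightarrow> x \<le> y \<Longrightarrow> F x \<le> F y"
proof -
  define g where "g x = 1 / f x" for x
  have gpos: "g x > 0" if "x \<in> {c..d}" for x using pos sub that unfolding g_def by auto
  have fnz: "f x \<noteq> 0" if "x \<in> {c..d}" for x using pos sub that by force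
  have gc: "continuous_on {c..d} g" unfolding g_def
    by (intro continuous_intros continuous_on_subset[OF cont sub]) (use fnz in auto)
  define F where "F u = integral {c..u} g" for u
  have Fd: "(F has_real_derivative g x) (at x within {c..d})" if "x \<in> {c..d}" for x
    unfolding F_def using integral_has_real_derivative[OF gc that] .
  obtain B where B: "\<forall>x\<in>g ` {c..d}. norm x \<le> B"
    using compact_imp_bounded[OF compact_continuous_image[OF gc compact_Icc]] unfolding bounded_iff by blast
  define M where "M = max 0 B"
  have M0: "M \<ge> 0" unfolding M_def by simp
  have L: "\<bar>F x - F y\<bar> \<le> M * \<bar>x - y\<bar>" if "x \<in> {c..d}" "y \<in> {c..d}" for x y
  proof -
    have "norm (F x - F y) \<le> M * norm (x - y)"
    proof (rule field_differentiable_bound[of "{c..d}" F g M])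
      show "convex {c..d}" by simp
      show "(F has_field_derivative g z) (at z within {c..d})" if "z \<in> {c..d}" for z using Fd[OF that] .
      show "norm (g z) \<le> M" if "z \<in> {c..d}" for z using B that unfolding M_def by force
    qed (use that in auto)
    then show ?thesis by simp
  qed
  have D: "(F has_real_derivative g x) (at x)" if "x \<in> {c<..<d}" for x
  proof -
    have "x \<in> {c..d}" using that by auto
    from Fd[OF this] have "(F has_real_derivative g x) (at x within {c..d})" .
    moreover have "at x within {c..d} = at x" using that by (intro at_within_interior) simp
    ultimately show ?thesis by simp
  qed
  have Mono: "F x \<le> F y" if "x \<in> {c..d}" "y \<in> {c..d}" "x \<le> y" for x y
  proof -
    have gi: "g integrable_on {c..y}"
      using continuous_on_subset[OF gc] that by (intro integrable_continuous_real) auto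
    have "integral {c..x} g + integral {x..y} g = integral {c..y} g"
      using Henstock_Kurzweil_Integration.integral_combine[where f=g and a=c and c=x and b=y] that gi by auto
    moreover have "0 \<le> integral {x..y} g"
    proof (rule Henstock_Kurzweil_Integration.integral_nonneg)
      show "g integrable_on {x..y}"
        using continuous_on_subset[OF gc] that by (intro integrable_continuous_real) auto
      show "0 \<le> g z" if "z \<in> {x..y}" for z using gpos[of z] that \<open>x \<in> {c..d}\<close> \<open>y \<in> {c..d}\<close> by auto
    qed
    ultimately show ?thesis unfolding F_def by linarith
  qed
  show thesis
  proof (rule that[of M F])
    show "M \<ge> 0" by (rule M0)
    show "(F has_real_derivative 1 / f x) (at x)" if "x \<in> {c<..<d}" for x using D[OF that] unfolding g_def .
  qed (use L Mono in auto)
qed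

lemma F_exists':
  assumes cont: "continuous_on I f" and pos: "\<forall>t\<in>I. f t > 0" and sub: "{c..d} \<subseteq> I"
  shows "\<exists>M F. M \<ge> 0 \<and> (\<forall>x\<in>{c<..<d}. (F has_real_derivative 1 / f x) (at x)) \<and>
    (\<forall>x\<in>{c..d}. \<forall>y\<in>{c..d}. \<bar>F x - F y\<bar> \<le> M * \<bar>x - y\<bar>) \<and>
    (\<forall>x\<in>{c..d}. \<forall>y\<in>{c..d}. x \<le> y \<longrightarrow> F x \<le> F y)"
proof (rule F_exists[OF cont pos sub])
  fix M F assume A: "M \<ge> 0" and B: "\<And>x. x \<in> {c<..<d} \<Longrightarrow> (F has_real_derivative 1 / f x) (at x)"
    and C: "\<And>x y. x \<in> {c..d} \<Longrightarrow> y \<in> {c..d} \<Longrightarrow> \<bar>F x - F y\<bar> \<le> M * \<bar>x - y\<bar>"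
    and D: "\<And>x y. x \<in> {c..d} \<Longrightarrow> y \<in> {c..d} \<Longrightarrow> x \<le> y \<Longrightarrow> F x \<le> F y"
  show ?thesis
    by (intro exI[of _ M] exI[of _ F] conjI ballI impI A B C D) assumption+
qed

lemma cone_space_fst: "y \<in> cone_space I \<longleftrightarrow> fst y \<in> I"
  unfolding cone_space_def by (cases y) auto

lemma abs_fst_le_cone_dist: "\<bar>fst y - fst y'\<bar> \<le> cone_dist y y'"
  unfolding cone_dist_def by simp

lemma fd_bound:
  fixes \<gamma> :: "real \<Rightarrow> real \<times> 'a::metric_space"
  assumes c: "causal_curve I f \<gamma> a b" and fd: "future_directed \<gamma> a b" and pos: "\<forall>t\<in>I. f t > 0"
    and cd: "c \<le> fst (\<gamma> a)" "fst (\<gamma> b) \<le> d" and M: "M \<ge> 0"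
    and Fd: "\<And>x. x \<in> {c<..<d} \<Longrightarrow> (F has_real_derivative 1 / f x) (at x)"
    and FL: "\<And>x y. x \<in> {c..d} \<Longrightarrow> y \<in> {c..d} \<Longrightarrow> \<bar>F x - F y\<bar> \<le> M * \<bar>x - y\<bar>"
  shows "fst (\<gamma> a) < fst (\<gamma> b) \<and> dist (snd (\<gamma> a)) (snd (\<gamma> b)) \<le> F (fst (\<gamma> b)) - F (fst (\<gamma> a))"
proof -
  have ab: "a < b" by (rule causal_curveD(1)[OF c])
  have sm: "strict_mono_on {a..b} (fst \<circ> \<gamma>)" by (rule fd_incr[OF c fd])
  have lt: "fst (\<gamma> a) < fst (\<gamma> b)" using strict_mono_onD[OF sm, of a b] ab by auto
  have rng: "fst (\<gamma> u) \<in> {fst (\<gamma> a)..fst (\<gamma> b)}" if "u \<in> {a..b}" for u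
    using strict_mono_on_leD[OF sm, of a u] strict_mono_on_leD[OF sm, of u b] that by auto
  have rngo: "fst (\<gamma> u) \<in> {fst (\<gamma> a)<..<fst (\<gamma> b)}" if "u \<in> {a<..<b}" for u
    using strict_mono_onD[OF sm, of a u] strict_mono_onD[OF sm, of u b] that by auto
  have inI: "fst (\<gamma> u) \<in> I" if "u \<in> {a..b}" for u
  proof -
    have "\<gamma> u \<in> cone_space I" using causal_curveD(2)[OF c] that by blast
    then show ?thesis by (simp add: cone_space_fst)
  qed
  have "dist (snd (\<gamma> a)) (snd (\<gamma> b)) \<le> (F \<circ> (fst \<circ> \<gamma>)) b - (F \<circ> (fst \<circ> \<gamma>)) a"
  proof (rule causal_bound[OF c order_refl less_imp_le[OF ab] order_refl M])
    fix u w assume u: "u \<in> {a..b}" and w: "w \<in> {a..b}"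
    have "\<bar>F (fst (\<gamma> u)) - F (fst (\<gamma> w))\<bar> \<le> M * \<bar>fst (\<gamma> u) - fst (\<gamma> w)\<bar>"
      using rng[OF u] rng[OF w] cd by (intro FL) auto
    also have "\<dots> \<le> M * cone_dist (\<gamma> u) (\<gamma> w)"
      using M abs_fst_le_cone_dist[of "\<gamma> u" "\<gamma> w"] by (intro mult_left_mono) auto
    finally show "\<bar>(F \<circ> (fst \<circ> \<gamma>)) u - (F \<circ> (fst \<circ> \<gamma>)) w\<bar> \<le> M * cone_dist (\<gamma> u) (\<gamma> w)"
      by simp
  next
    fix t da v assume t: "t \<in> {a<..<b}" and d: "((fst \<circ> \<gamma>) has_real_derivative da) (at t)"
      and md: "has_metric_derivative (snd \<circ> \<gamma>) v t"
      and ineq: "- (da\<^sup>2) + (f (fst (\<gamma> t)))\<^sup>2 * v\<^sup>2 \<le> 0"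
    have "(fst \<circ> \<gamma>) t \<in> {c<..<d}" using rngo[OF t] cd by auto
    from DERIV_chain[OF Fd[OF this] d]
    have D: "((F \<circ> (fst \<circ> \<gamma>)) has_real_derivative 1 / f (fst (\<gamma> t)) * da) (at t)" by simp
    have fpos: "f (fst (\<gamma> t)) > 0" using pos inI[of t] t by auto
    have "da \<ge> 0" by (rule mono_deriv_nonneg[OF sm t d])
    moreover have "v \<ge> 0" by (rule metric_deriv_nonneg[OF md])
    ultimately have "f (fst (\<gamma> t)) * v \<le> da" using fpos ineq by (intro sq_ineq)
    then have "v \<le> 1 / f (fst (\<gamma> t)) * da" using fpos by (simp add: pos_le_divide_eq mult.commute)
    with D show "\<exists>D. ((F \<circ> (fst \<circ> \<gamma>)) has_real_derivative D) (at t) \<and> v \<le> D" by blast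
  qed
  then show ?thesis using lt by (simp add: o_def)
qed

lemma geodesic_const_speed:
  fixes x y :: "'a::metric_space"
  assumes geo: "geodesic_space TYPE('a)"
  obtains \<sigma> :: "real \<Rightarrow> 'a" where "\<sigma> 0 = x" "\<sigma> 1 = y"
    "\<And>l m. l \<in> {0..1} \<Longrightarrow> m \<in> {0..1} \<Longrightarrow> dist (\<sigma> l) (\<sigma> m) = \<bar>l - m\<bar> * dist x y"
proof -
  have "\<forall>x y::'a. \<exists>\<gamma>. continuous_on {0..1} \<gamma> \<and> \<gamma> 0 = x \<and> \<gamma> 1 = y \<and>
      curve_length dist \<gamma> 0 1 = ereal (dist x y)" using geo unfolding geodesic_space_def .
  then obtain \<gamma> :: "real \<Rightarrow> 'a" where gc: "continuous_on {0..1} \<gamma>" and g0: "\<gamma> 0 = x" and g1: "\<gamma> 1 = y"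
    and gl: "curve_length dist \<gamma> 0 1 = ereal (dist x y)" by blast
  define L where "L = dist x y"
  have L0: "L \<ge> 0" unfolding L_def by simp
  have three: "dist x (\<gamma> u) + dist (\<gamma> u) (\<gamma> w) + dist (\<gamma> w) y \<le> L" if "0 \<le> u" "u \<le> w" "w \<le> 1" for u w
  proof -
    define t where "t i = (if i = 0 then 0 else if i = 1 then u else if i = 2 then w else (1::real))" for i :: nat
    have mem: "(3::nat, t) \<in> {(n, t). t 0 = 0 \<and> t n = 1 \<and> (\<forall>i<n. t i \<le> t (Suc i))}"
      using that unfolding t_def by (auto simp: less_Suc_eq numeral_3_eq_3)
    have "ereal (\<Sum>i<fst (3::nat, t). dist (\<gamma> (snd (3::nat, t) i)) (\<gamma> (snd (3::nat, t) (Suc i)))) \<le> curve_length dist \<gamma> 0 1"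
      unfolding curve_length_def using mem by (rule SUP_upper)
    then have "(\<Sum>i<3. dist (\<gamma> (t i)) (\<gamma> (t (Suc i)))) \<le> L" using gl unfolding L_def by simp
    moreover have "(\<Sum>i<3. dist (\<gamma> (t i)) (\<gamma> (t (Suc i)))) = dist x (\<gamma> u) + dist (\<gamma> u) (\<gamma> w) + dist (\<gamma> w) y"
      by (simp add: numeral_3_eq_3 t_def g0 g1)
    ultimately show ?thesis by simp
  qed
  have eq: "dist x (\<gamma> u) + dist (\<gamma> u) (\<gamma> w) + dist (\<gamma> w) y = L" if "0 \<le> u" "u \<le> w" "w \<le> 1" for u w
  proof -
    have "dist x y \<le> dist x (\<gamma> u) + dist (\<gamma> u) y" by (rule dist_triangle)
    moreover have "dist (\<gamma> u) y \<le> dist (\<gamma> u) (\<gamma> w) + dist (\<gamma> w) y" by (rule dist_triangle)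
    ultimately show ?thesis using three[OF that] unfolding L_def by linarith
  qed
  have eq1: "dist x (\<gamma> u) + dist (\<gamma> u) y = L" if "0 \<le> u" "u \<le> 1" for u
    using eq[of u u] that by simp
  have ex: "\<exists>u\<ge>0. u \<le> 1 \<and> dist x (\<gamma> u) = l * L" if "l \<in> {0..1}" for l
  proof (rule IVT')
    show "dist x (\<gamma> 0) \<le> l * L" using that L0 g0 by simp
    show "l * L \<le> dist x (\<gamma> 1)" using that L0 g1 unfolding L_def
      by (simp add: mult_left_le_one_le)
    show "continuous_on {0..1} (\<lambda>u. dist x (\<gamma> u))" by (intro continuous_intros gc)
  qed simp
  define \<sigma> where "\<sigma> l = \<gamma> (SOME u. u \<ge> 0 \<and> u \<le> 1 \<and> dist x (\<gamma> u) = l * L)" for l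
  have \<sigma>u: "\<exists>u. u \<ge> 0 \<and> u \<le> 1 \<and> \<sigma> l = \<gamma> u \<and> dist x (\<gamma> u) = l * L" if "l \<in> {0..1}" for l
  proof -
    have "\<exists>u. u \<ge> 0 \<and> u \<le> 1 \<and> dist x (\<gamma> u) = l * L" using ex[OF that] by blast
    from someI_ex[OF this] show ?thesis unfolding \<sigma>_def by blast
  qed
  have D: "dist (\<gamma> u) (\<gamma> w) = (m - l) * L" if "0 \<le> u" "u \<le> w" "w \<le> 1"
      "dist x (\<gamma> u) = l * L" "dist x (\<gamma> w) = m * L" for u w l m
  proof -
    have "dist (\<gamma> w) y = L - m * L" using eq1[of w] that by simp
    then show ?thesis using eq[OF that(1-3)] that(4) by (simp add: algebra_simps)
  qed
  have absL: "(m - l) * L = \<bar>l - m\<bar> * L" if "(m - l) * L \<ge> 0" for l m :: real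
  proof (cases "L = 0")
    case False
    then have "L > 0" using L0 by simp
    then have "m - l \<ge> 0" using that by (simp add: zero_le_mult_iff)
    then show ?thesis by simp
  qed simp
  show thesis
  proof
    obtain u where u: "u \<ge> 0" "u \<le> 1" "\<sigma> 0 = \<gamma> u" "dist x (\<gamma> u) = 0 * L" using \<sigma>u[of 0] by auto
    then show "\<sigma> 0 = x" by simp
  next
    obtain u where u: "u \<ge> 0" "u \<le> 1" "\<sigma> 1 = \<gamma> u" "dist x (\<gamma> u) = 1 * L" using \<sigma>u[of 1] by auto
    then have "dist (\<gamma> u) y = 0" using eq1[of u] by simp
    then show "\<sigma> 1 = y" using u by simp
  next
    fix l m :: real assume l: "l \<in> {0..1}" and m: "m \<in> {0..1}"
    obtain u where u: "u \<ge> 0" "u \<le> 1" "\<sigma> l = \<gamma> u" "dist x (\<gamma> u) = l * L" using \<sigma>u[OF l] by auto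
    obtain w where w: "w \<ge> 0" "w \<le> 1" "\<sigma> m = \<gamma> w" "dist x (\<gamma> w) = m * L" using \<sigma>u[OF m] by auto
    show "dist (\<sigma> l) (\<sigma> m) = \<bar>l - m\<bar> * dist x y"
    proof (cases "u \<le> w")
      case True
      have d: "dist (\<gamma> u) (\<gamma> w) = (m - l) * L" using D[OF u(1) True w(2) u(4) w(4)] .
      then have "(m - l) * L \<ge> 0" by (metis zero_le_dist)
      then show ?thesis using d absL u w unfolding L_def by simp
    next
      case False
      have d: "dist (\<gamma> w) (\<gamma> u) = (l - m) * L" using D[OF w(1) _ u(2) w(4) u(4)] False by simp
      then have "(l - m) * L \<ge> 0" by (metis zero_le_dist)
      then have "(l - m) * L = \<bar>m - l\<bar> * L" by (rule absL)
      then show ?thesis using d u w unfolding L_def by (simp add: dist_commute abs_minus_commute)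
    qed
  qed
qed

lemma ac_id: "abs_cont_metric dist (\<lambda>x::real. x) a b"
  unfolding abs_cont_metric_def
proof (intro allI impI)
  fix \<epsilon> :: real assume "\<epsilon> > 0"
  have "\<forall>(n::nat) (s::nat \<Rightarrow> real) (t::nat \<Rightarrow> real). (\<forall>i<n. a \<le> s i \<and> s i \<le> t i \<and> t i \<le> b) \<and>
        (\<forall>i<n. \<forall>j<n. i \<noteq> j \<longrightarrow> t i \<le> s j \<or> t j \<le> s i) \<and>
        (\<Sum>i<n. t i - s i) < \<epsilon> \<longrightarrow> (\<Sum>i<n. dist (s i) (t i)) < \<epsilon>"
  proof (intro allI impI)
    fix n :: nat and s t :: "nat \<Rightarrow> real"
    assume H: "(\<forall>i<n. a \<le> s i \<and> s i \<le> t i \<and> t i \<le> b) \<and>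
        (\<forall>i<n. \<forall>j<n. i \<noteq> j \<longrightarrow> t i \<le> s j \<or> t j \<le> s i) \<and> (\<Sum>i<n. t i - s i) < \<epsilon>"
    have "(\<Sum>i<n. dist (s i) (t i)) = (\<Sum>i<n. t i - s i)"
      using H by (intro sum.cong) (auto simp: dist_real_def)
    then show "(\<Sum>i<n. dist (s i) (t i)) < \<epsilon>" using H by simp
  qed
  then show "\<exists>\<delta>>0. \<forall>(n::nat) (s::nat \<Rightarrow> real) (t::nat \<Rightarrow> real). (\<forall>i<n. a \<le> s i \<and> s i \<le> t i \<and> t i \<le> b) \<and>
        (\<forall>i<n. \<forall>j<n. i \<noteq> j \<longrightarrow> t i \<le> s j \<or> t j \<le> s i) \<and>
        (\<Sum>i<n. t i - s i) < \<delta> \<longrightarrow> (\<Sum>i<n. dist (s i) (t i)) < \<epsilon>" using \<open>\<epsilon> > 0\<close> by blast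
qed

lemma construct_causal:
  fixes x0 x1 :: "'a::metric_space"
  assumes geo: "geodesic_space TYPE('a)" and pos: "\<forall>t\<in>I. f t > 0"
    and sub: "{c..d} \<subseteq> I" and s: "c \<le> s0" "s0 < s1" "s1 \<le> d"
    and Fd: "\<And>x. x \<in> {c<..<d} \<Longrightarrow> (F has_real_derivative 1 / f x) (at x)"
    and FL: "\<And>x y. x \<in> {c..d} \<Longrightarrow> y \<in> {c..d} \<Longrightarrow> \<bar>F x - F y\<bar> \<le> M * \<bar>x - y\<bar>" and M: "M \<ge> 0"
    and Fm: "\<And>x y. x \<in> {c..d} \<Longrightarrow> y \<in> {c..d} \<Longrightarrow> x \<le> y \<Longrightarrow> F x \<le> F y"
    and dle: "dist x0 x1 \<le> F s1 - F s0"
  shows "causal_le I f (s0, x0) (s1, x1)"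
proof -
  obtain \<sigma> :: "real \<Rightarrow> 'a" where \<sigma>0: "\<sigma> 0 = x0" and \<sigma>1: "\<sigma> 1 = x1"
    and \<sigma>d: "\<And>l m. l \<in> {0..1} \<Longrightarrow> m \<in> {0..1} \<Longrightarrow> dist (\<sigma> l) (\<sigma> m) = \<bar>l - m\<bar> * dist x0 x1"
    using geodesic_const_speed[OF geo] by blast
  define L where "L = dist x0 x1"
  define \<Delta> where "\<Delta> = F s1 - F s0"
  have L0: "L \<ge> 0" unfolding L_def by simp
  have L\<Delta>: "L \<le> \<Delta>" using dle unfolding L_def \<Delta>_def .
  have \<Delta>0: "\<Delta> \<ge> 0" using L0 L\<Delta> by simp
  define \<phi> where "\<phi> \<tau> = (F \<tau> - F s0) / \<Delta>" for \<tau>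
  define \<gamma> where "\<gamma> \<tau> = (\<tau>, \<sigma> (\<phi> \<tau>))" for \<tau>
  have inCD: "\<tau> \<in> {c..d}" if "\<tau> \<in> {s0..s1}" for \<tau> using that s by auto
  have \<phi>01: "\<phi> \<tau> \<in> {0..1}" if "\<tau> \<in> {s0..s1}" for \<tau>
  proof -
    have "F s0 \<le> F \<tau>" "F \<tau> \<le> F s1" using Fm inCD that s by auto
    then show ?thesis unfolding \<phi>_def \<Delta>_def by (auto simp: divide_le_eq_1)
  qed
  have dist\<beta>: "dist (\<sigma> (\<phi> u)) (\<sigma> (\<phi> w)) = L * (\<bar>F u - F w\<bar> / \<Delta>)" if "u \<in> {s0..s1}" "w \<in> {s0..s1}" for u w
  proof -
    have "\<phi> u - \<phi> w = (F u - F w) / \<Delta>" unfolding \<phi>_def by (simp add: diff_divide_distrib)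
    then have "\<bar>\<phi> u - \<phi> w\<bar> = \<bar>F u - F w\<bar> / \<Delta>" using \<Delta>0 by simp
    then show ?thesis using \<sigma>d[OF \<phi>01[OF that(1)] \<phi>01[OF that(2)]] unfolding L_def by simp
  qed
  define K where "K = 1 + L * (M / \<Delta>)"
  have K0: "K \<ge> 0" unfolding K_def using L0 M \<Delta>0 by simp
  have cd_le: "cone_dist (\<gamma> u) (\<gamma> w) \<le> K * dist u w" if "u \<in> {s0..s1}" "w \<in> {s0..s1}" for u w
  proof -
    have "\<bar>F u - F w\<bar> / \<Delta> \<le> (M * \<bar>u - w\<bar>) / \<Delta>"
      using FL[OF inCD[OF that(1)] inCD[OF that(2)]] \<Delta>0 by (rule divide_right_mono)
    then have "L * (\<bar>F u - F w\<bar> / \<Delta>) \<le> L * ((M * \<bar>u - w\<bar>) / \<Delta>)" using L0 by (rule mult_left_mono)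
    then have "dist (\<sigma> (\<phi> u)) (\<sigma> (\<phi> w)) \<le> L * (M / \<Delta>) * \<bar>u - w\<bar>" using dist\<beta>[OF that] by simp
    then show ?thesis unfolding cone_dist_def \<gamma>_def K_def by (simp add: dist_real_def algebra_simps)
  qed
  have ac: "abs_cont_metric cone_dist \<gamma> s0 s1"
    by (rule ac_transfer[where \<gamma>="\<lambda>x. x" and h=\<gamma> and dd=dist and ee=cone_dist and aa=s0 and bb=s1
          and a=s0 and b=s1 and L=K, OF ac_id K0 order_refl order_refl cd_le])
  have fst\<gamma>: "fst \<circ> \<gamma> = (\<lambda>x. x)" unfolding \<gamma>_def by (simp add: fun_eq_iff)
  have der1: "((fst \<circ> \<gamma>) has_real_derivative 1) (at t)" for t unfolding fst\<gamma> by (rule DERIV_ident)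
  have good: "\<exists>da v. ((fst \<circ> \<gamma>) has_real_derivative da) (at t) \<and>
               has_metric_derivative (snd \<circ> \<gamma>) v t \<and>
               - (da\<^sup>2) + (f (fst (\<gamma> t)))\<^sup>2 * v\<^sup>2 \<le> 0" if t: "t \<in> {s0<..<s1}" for t
  proof -
    have tcd: "t \<in> {c<..<d}" using t s by auto
    have "t \<in> I" using sub tcd by auto
    then have ft: "f t > 0" using pos by auto
    define \<phi>' where "\<phi>' = (1 / f t) / \<Delta>"
    have "((\<lambda>\<tau>. F \<tau> - F s0) has_real_derivative (1 / f t - 0)) (at t)"
      by (intro DERIV_diff Fd[OF tcd] DERIV_const)
    then have D\<phi>: "(\<phi> has_real_derivative \<phi>') (at t)" unfolding \<phi>_def \<phi>'_def
      using DERIV_cdivide by fastforce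
    have lim1: "((\<lambda>s. (\<phi> s - \<phi> t) / (s - t)) \<longlongrightarrow> \<phi>') (at t)"
      using D\<phi> by (simp add: has_field_derivative_iff)
    have lim2: "((\<lambda>s. L * \<bar>(\<phi> s - \<phi> t) / (s - t)\<bar>) \<longlongrightarrow> L * \<bar>\<phi>'\<bar>) (at t)"
      by (intro tendsto_intros lim1)
    have ev: "eventually (\<lambda>s. s \<in> {s0<..<s1}) (at t)" using t by (intro eventually_at_in_open') auto
    have "eventually (\<lambda>s. L * \<bar>(\<phi> s - \<phi> t) / (s - t)\<bar> = dist ((snd \<circ> \<gamma>) s) ((snd \<circ> \<gamma>) t) / \<bar>s - t\<bar>) (at t)"
      using ev
    proof (rule eventually_mono)
      fix s assume "s \<in> {s0<..<s1}"
      then have "dist (\<sigma> (\<phi> s)) (\<sigma> (\<phi> t)) = \<bar>\<phi> s - \<phi> t\<bar> * L"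
        using \<sigma>d[OF \<phi>01 \<phi>01] t unfolding L_def by auto
      then show "L * \<bar>(\<phi> s - \<phi> t) / (s - t)\<bar> = dist ((snd \<circ> \<gamma>) s) ((snd \<circ> \<gamma>) t) / \<bar>s - t\<bar>"
        unfolding \<gamma>_def by (simp add: abs_divide)
    qed
    then have md: "has_metric_derivative (snd \<circ> \<gamma>) (L * \<bar>\<phi>'\<bar>) t"
      unfolding has_metric_derivative_def using lim2 by (rule tendsto_cong[THEN iffD1])
    have "f t * (L * \<bar>\<phi>'\<bar>) = L / \<Delta>" unfolding \<phi>'_def using ft \<Delta>0 by (simp add: abs_divide)
    moreover have "L / \<Delta> \<le> 1" using L\<Delta> L0 \<Delta>0 by (cases "\<Delta> = 0") (auto simp: divide_le_eq_1)
    moreover have "L / \<Delta> \<ge> 0" using L0 \<Delta>0 by simp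
    ultimately have "(f t * (L * \<bar>\<phi>'\<bar>))\<^sup>2 \<le> 1\<^sup>2" by (metis power_mono)
    then have "- (1\<^sup>2) + (f (fst (\<gamma> t)))\<^sup>2 * (L * \<bar>\<phi>'\<bar>)\<^sup>2 \<le> 0"
      unfolding \<gamma>_def by (simp add: power_mult_distrib)
    then show ?thesis using der1 md by blast
  qed
  have AE2: "AE t in lebesgue. t \<notin> {s0, s1}" by (rule AE_not_in[OF negligible_two])
  have AEc: "AE t in lebesgue. t \<in> {s0..s1} \<longrightarrow>
        (\<exists>da v. ((fst \<circ> \<gamma>) has_real_derivative da) (at t) \<and>
               has_metric_derivative (snd \<circ> \<gamma>) v t \<and>
               - (da\<^sup>2) + (f (fst (\<gamma> t)))\<^sup>2 * v\<^sup>2 \<le> 0)"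
    using AE2 by eventually_elim (use good in auto)
  have img: "\<gamma> ` {s0..s1} \<subseteq> cone_space I"
    using sub s unfolding \<gamma>_def cone_space_def by auto
  have sm: "strict_mono_on {s0..s1} (fst \<circ> \<gamma>)" unfolding fst\<gamma> by (rule strict_mono_onI) auto
  have cc: "causal_curve I f \<gamma> s0 s1"
    unfolding causal_curve_def using s(2) img ac sm AEc by blast
  have fd: "future_directed \<gamma> s0 s1"
    unfolding future_directed_def
  proof (intro AE_I2 impI)
    fix t show "\<exists>da. ((fst \<circ> \<gamma>) has_real_derivative da) (at t) \<and> da > 0"
      using der1[of t] by (intro exI[of _ 1]) simp
  qed
  have g0: "\<gamma> s0 = (s0, x0)" unfolding \<gamma>_def \<phi>_def using \<sigma>0 by simp
  have g1: "\<gamma> s1 = (s1, x1)"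
  proof (cases "\<Delta> = 0")
    case True
    then have "L = 0" using L0 L\<Delta> by simp
    then have "x0 = x1" unfolding L_def by simp
    then show ?thesis unfolding \<gamma>_def \<phi>_def using \<sigma>0 True \<Delta>_def by simp
  next
    case False
    then show ?thesis unfolding \<gamma>_def \<phi>_def using \<sigma>1 \<Delta>_def by simp
  qed
  show ?thesis unfolding causal_le_def using cc fd g0 g1 by blast
qed

lemma cone_dist_metric: "Metric_space (cone_space I) (cone_dist :: real \<times> 'a::metric_space \<Rightarrow> _)"
proof
  fix x y z :: "real \<times> 'a"
  show "0 \<le> cone_dist x y" unfolding cone_dist_def by simp
  show "cone_dist x y = cone_dist y x" unfolding cone_dist_def by (simp add: abs_minus_commute dist_commute)
  show "cone_dist x y = 0 \<longleftrightarrow> x = y" unfolding cone_dist_def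
    by (cases x, cases y) (auto simp: add_nonneg_eq_0_iff)
  show "cone_dist x z \<le> cone_dist x y + cone_dist y z" unfolding cone_dist_def
    using dist_triangle[of "snd x" "snd z" "snd y"] by linarith
qed

lemma dist_le_cone: "dist x y \<le> cone_dist x (y :: real \<times> 'a::metric_space)"
proof -
  define a where "a = dist (fst x) (fst y)"
  define b where "b = dist (snd x) (snd y)"
  have ab: "a \<ge> 0" "b \<ge> 0" unfolding a_def b_def by simp_all
  have "a\<^sup>2 + b\<^sup>2 \<le> (a + b)\<^sup>2" using ab by (simp add: power2_sum)
  then have "sqrt (a\<^sup>2 + b\<^sup>2) \<le> sqrt ((a + b)\<^sup>2)" by (rule real_sqrt_le_mono)
  also have "\<dots> = a + b" using ab by simp
  finally show ?thesis unfolding dist_prod_def cone_dist_def a_def b_def by (simp add: dist_real_def)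
qed

lemma cone_le_dist: "cone_dist x y \<le> 2 * dist x (y :: real \<times> 'a::metric_space)"
proof -
  have "dist (fst x) (fst y) \<le> dist x y" "dist (snd x) (snd y) \<le> dist x y"
    unfolding dist_prod_def by simp_all
  then show ?thesis unfolding cone_dist_def by (simp add: dist_real_def)
qed

lemma cone_top: "cone_topology I = top_of_set (cone_space I :: (real \<times> 'a::metric_space) set)"
proof -
  interpret Metric_space "cone_space I :: (real \<times> 'a) set" cone_dist by (rule cone_dist_metric)
  show ?thesis unfolding cone_topology_def topology_eq
  proof (intro allI)
    fix S :: "(real \<times> 'a) set"
    show "openin mtopology S \<longleftrightarrow> openin (top_of_set (cone_space I)) S"
      unfolding openin_mtopology openin_euclidean_subtopology_iff
    proof (intro iffI conjI)
      assume H: "S \<subseteq> cone_space I \<and> (\<forall>x. x \<in> S \<longrightarrow> (\<exists>r>0. mball x r \<subseteq> S))"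
      then show "S \<subseteq> cone_space I" by blast
      show "\<forall>x\<in>S. \<exists>e>0. \<forall>x'\<in>cone_space I. dist x' x < e \<longrightarrow> x' \<in> S"
      proof
        fix x assume x: "x \<in> S"
        then obtain r where "r > 0" and r: "mball x r \<subseteq> S" using H by blast
        show "\<exists>e>0. \<forall>x'\<in>cone_space I. dist x' x < e \<longrightarrow> x' \<in> S"
        proof (intro exI[of _ "r/2"] conjI ballI impI)
          fix x' assume x': "x' \<in> cone_space I" "dist x' x < r/2"
          have "cone_dist x x' \<le> 2 * dist x x'" by (rule cone_le_dist)
          then have "cone_dist x x' < r" using x' by (simp add: dist_commute)
          moreover have "x \<in> cone_space I" using x H by blast
          ultimately have "x' \<in> mball x r" using x' by simp
          then show "x' \<in> S" using r by blast
        qed (use \<open>r > 0\<close> in simp)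
      qed
    next
      assume H: "S \<subseteq> cone_space I \<and> (\<forall>x\<in>S. \<exists>e>0. \<forall>x'\<in>cone_space I. dist x' x < e \<longrightarrow> x' \<in> S)"
      then show "S \<subseteq> cone_space I" by blast
      show "\<forall>x. x \<in> S \<longrightarrow> (\<exists>r>0. mball x r \<subseteq> S)"
      proof (intro allI impI)
        fix x assume x: "x \<in> S"
        then obtain e where "e > 0" and e: "\<forall>x'\<in>cone_space I. dist x' x < e \<longrightarrow> x' \<in> S" using H by blast
        show "\<exists>r>0. mball x r \<subseteq> S"
        proof (intro exI[of _ e] conjI subsetI)
          fix x' assume "x' \<in> mball x e"
          then have x': "x' \<in> cone_space I" "cone_dist x x' < e" by auto
          have "dist x' x \<le> cone_dist x x'" using dist_le_cone[of x' x] commute by (simp add: dist_commute)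
          then show "x' \<in> S" using e x' by auto
        qed (rule \<open>e > 0\<close>)
      qed
    qed
  qed
qed

lemma compactin_cone: "compactin (cone_topology I) K \<longleftrightarrow> compact K \<and> K \<subseteq> cone_space I"
  by (simp add: cone_top compactin_subtopology)

lemma ntl_bound:
  fixes \<gamma> :: "real \<Rightarrow> real \<times> 'a::metric_space"
  assumes c: "causal_curve I f \<gamma> a b" and m: "m > 0" and fm: "\<And>u. u \<in> {a..b} \<Longrightarrow> f (fst (\<gamma> u)) \<ge> m"
    and s: "a \<le> s" "s \<le> s'" "s' \<le> b"
  shows "dist (snd (\<gamma> s)) (snd (\<gamma> s')) \<le> \<bar>fst (\<gamma> s') - fst (\<gamma> s)\<bar> / m"
proof -
  have K: "1/m \<ge> 0" using m by simp
  have fpos: "f (fst (\<gamma> t)) > 0" if "t \<in> {a<..<b}" for t using fm[of t] m that by auto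
  have "strict_mono_on {a..b} (fst \<circ> \<gamma>) \<or> strict_mono_on {a..b} (\<lambda>t. - fst (\<gamma> t))"
    by (rule causal_curveD(4)[OF c])
  then show ?thesis
  proof
    assume sm: "strict_mono_on {a..b} (fst \<circ> \<gamma>)"
    have "dist (snd (\<gamma> s)) (snd (\<gamma> s')) \<le> (\<lambda>u. (fst \<circ> \<gamma>) u / m) s' - (\<lambda>u. (fst \<circ> \<gamma>) u / m) s"
    proof (rule causal_bound[OF c s K])
      fix u w assume "u \<in> {a..b}" "w \<in> {a..b}"
      have "\<bar>(fst \<circ> \<gamma>) u / m - (fst \<circ> \<gamma>) w / m\<bar> = \<bar>fst (\<gamma> u) - fst (\<gamma> w)\<bar> / m"
        using m by (simp add: diff_divide_distrib[symmetric] abs_divide)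
      also have "\<dots> \<le> cone_dist (\<gamma> u) (\<gamma> w) / m"
        using abs_fst_le_cone_dist[of "\<gamma> u" "\<gamma> w"] m by (simp add: divide_right_mono)
      finally show "\<bar>(fst \<circ> \<gamma>) u / m - (fst \<circ> \<gamma>) w / m\<bar> \<le> 1 / m * cone_dist (\<gamma> u) (\<gamma> w)" by simp
    next
      fix t da v assume t: "t \<in> {a<..<b}" and d: "((fst \<circ> \<gamma>) has_real_derivative da) (at t)"
        and md: "has_metric_derivative (snd \<circ> \<gamma>) v t"
        and ineq: "- (da\<^sup>2) + (f (fst (\<gamma> t)))\<^sup>2 * v\<^sup>2 \<le> 0"
      have D: "((\<lambda>u. (fst \<circ> \<gamma>) u / m) has_real_derivative da / m) (at t)" using d by (rule DERIV_cdivide)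
      have "da \<ge> 0" by (rule mono_deriv_nonneg[OF sm t d])
      moreover have v0: "v \<ge> 0" by (rule metric_deriv_nonneg[OF md])
      ultimately have "f (fst (\<gamma> t)) * v \<le> da" using fpos[OF t] ineq by (intro sq_ineq)
      moreover have "m * v \<le> f (fst (\<gamma> t)) * v" using fm[of t] t v0 by (intro mult_right_mono) auto
      ultimately have "v \<le> da / m" using m by (simp add: pos_le_divide_eq mult.commute)
      with D show "\<exists>D. ((\<lambda>u. (fst \<circ> \<gamma>) u / m) has_real_derivative D) (at t) \<and> v \<le> D" by blast
    qed
    also have "\<dots> = (fst (\<gamma> s') - fst (\<gamma> s)) / m" by (simp add: diff_divide_distrib)
    also have "\<dots> \<le> \<bar>fst (\<gamma> s') - fst (\<gamma> s)\<bar> / m" using m by (simp add: divide_right_mono)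
    finally show ?thesis .
  next
    assume sm: "strict_mono_on {a..b} (\<lambda>t. - fst (\<gamma> t))"
    have "dist (snd (\<gamma> s)) (snd (\<gamma> s')) \<le> (\<lambda>u. - (fst \<circ> \<gamma>) u / m) s' - (\<lambda>u. - (fst \<circ> \<gamma>) u / m) s"
    proof (rule causal_bound[OF c s K])
      fix u w assume "u \<in> {a..b}" "w \<in> {a..b}"
      have "\<bar>- (fst \<circ> \<gamma>) u / m - - (fst \<circ> \<gamma>) w / m\<bar> = \<bar>fst (\<gamma> u) - fst (\<gamma> w)\<bar> / m"
        using m by (simp add: diff_divide_distrib[symmetric] abs_divide abs_minus_commute)
      also have "\<dots> \<le> cone_dist (\<gamma> u) (\<gamma> w) / m"
        using abs_fst_le_cone_dist[of "\<gamma> u" "\<gamma> w"] m by (simp add: divide_right_mono)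
      finally show "\<bar>- (fst \<circ> \<gamma>) u / m - - (fst \<circ> \<gamma>) w / m\<bar> \<le> 1 / m * cone_dist (\<gamma> u) (\<gamma> w)" by simp
    next
      fix t da v assume t: "t \<in> {a<..<b}" and d: "((fst \<circ> \<gamma>) has_real_derivative da) (at t)"
        and md: "has_metric_derivative (snd \<circ> \<gamma>) v t"
        and ineq: "- (da\<^sup>2) + (f (fst (\<gamma> t)))\<^sup>2 * v\<^sup>2 \<le> 0"
      have D: "((\<lambda>u. - (fst \<circ> \<gamma>) u / m) has_real_derivative - da / m) (at t)"
        using DERIV_cdivide[OF DERIV_minus[OF d], of m] by simp
      have sm': "strict_mono_on {a..b} (\<lambda>t. - (fst \<circ> \<gamma>) t)" using sm by (simp add: o_def)
      have "da \<le> 0" by (rule anti_deriv_nonpos[OF sm' t d])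
      then have "- da \<ge> 0" by simp
      moreover have v0: "v \<ge> 0" by (rule metric_deriv_nonneg[OF md])
      moreover have "- ((- da)\<^sup>2) + (f (fst (\<gamma> t)))\<^sup>2 * v\<^sup>2 \<le> 0" using ineq by simp
      ultimately have "f (fst (\<gamma> t)) * v \<le> - da" using fpos[OF t] by (intro sq_ineq)
      moreover have "m * v \<le> f (fst (\<gamma> t)) * v" using fm[of t] t v0 by (intro mult_right_mono) auto
      ultimately have "m * v \<le> - da" by linarith
      then have "v \<le> - da / m" by (subst pos_le_divide_eq[OF m]) (simp add: mult.commute)
      with D show "\<exists>D. ((\<lambda>u. - (fst \<circ> \<gamma>) u / m) has_real_derivative D) (at t) \<and> v \<le> D" by blast
    qed
    also have "\<dots> = (fst (\<gamma> s) - fst (\<gamma> s')) / m" by (simp add: diff_divide_distrib)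
    also have "\<dots> \<le> \<bar>fst (\<gamma> s') - fst (\<gamma> s)\<bar> / m" using m by (simp add: divide_right_mono)
    finally show ?thesis .
  qed
qed

lemma causal_le_cone:
  assumes "causal_le I f p r"
  shows "p \<in> cone_space I \<and> r \<in> cone_space I"
  using assms unfolding causal_le_def
proof
  assume "p \<in> cone_space I \<and> p = r" then show ?thesis by auto
next
  assume "\<exists>\<gamma> a b. causal_curve I f \<gamma> a b \<and> future_directed \<gamma> a b \<and> \<gamma> a = p \<and> \<gamma> b = r"
  then obtain \<gamma> a b where c: "causal_curve I f \<gamma> a b" and "\<gamma> a = p" "\<gamma> b = r" by blast
  moreover have "a < b" by (rule causal_curveD(1)[OF c])
  moreover have "\<gamma> ` {a..b} \<subseteq> cone_space I" by (rule causal_curveD(2)[OF c])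
  ultimately show ?thesis by auto
qed

lemma causal_le_fst:
  assumes "causal_le I f p r"
  shows "fst p \<le> fst r"
  using assms unfolding causal_le_def
proof
  assume "p \<in> cone_space I \<and> p = r" then show ?thesis by simp
next
  assume "\<exists>\<gamma> a b. causal_curve I f \<gamma> a b \<and> future_directed \<gamma> a b \<and> \<gamma> a = p \<and> \<gamma> b = r"
  then obtain \<gamma> a b where c: "causal_curve I f \<gamma> a b" and fd: "future_directed \<gamma> a b" and "\<gamma> a = p" "\<gamma> b = r" by blast
  moreover have "a < b" by (rule causal_curveD(1)[OF c])
  moreover have "strict_mono_on {a..b} (fst \<circ> \<gamma>)" by (rule fd_incr[OF c fd])
  ultimately show ?thesis using strict_mono_onD[of "{a..b}" "fst \<circ> \<gamma>" a b] by auto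
qed

lemma causal_le_bound:
  fixes p r :: "real \<times> 'a::metric_space"
  assumes le: "causal_le I f p r" and pos: "\<forall>t\<in>I. f t > 0"
    and cd: "c \<le> fst p" "fst r \<le> d" and M: "M \<ge> 0"
    and Fd: "\<And>x. x \<in> {c<..<d} \<Longrightarrow> (F has_real_derivative 1 / f x) (at x)"
    and FL: "\<And>x y. x \<in> {c..d} \<Longrightarrow> y \<in> {c..d} \<Longrightarrow> \<bar>F x - F y\<bar> \<le> M * \<bar>x - y\<bar>"
  shows "dist (snd p) (snd r) \<le> F (fst r) - F (fst p)"
  using le unfolding causal_le_def
proof
  assume "p \<in> cone_space I \<and> p = r" then show ?thesis by simp
next
  assume "\<exists>\<gamma> a b. causal_curve I f \<gamma> a b \<and> future_directed \<gamma> a b \<and> \<gamma> a = p \<and> \<gamma> b = r"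
  then obtain \<gamma> a b where c: "causal_curve I f \<gamma> a b" and fd: "future_directed \<gamma> a b"
    and ga: "\<gamma> a = p" and gb: "\<gamma> b = r" by blast
  have "fst (\<gamma> a) < fst (\<gamma> b) \<and> dist (snd (\<gamma> a)) (snd (\<gamma> b)) \<le> F (fst (\<gamma> b)) - F (fst (\<gamma> a))"
    using cd ga gb by (intro fd_bound[OF c fd pos _ _ M Fd FL]) auto
  then show ?thesis using ga gb by simp
qed

lemma causal_le_construct:
  fixes p r :: "real \<times> 'a::metric_space"
  assumes geo: "geodesic_space TYPE('a)" and pos: "\<forall>t\<in>I. f t > 0" and p: "p \<in> cone_space I"
    and sub: "{c..d} \<subseteq> I" and cd: "c \<le> fst p" "fst p \<le> fst r" "fst r \<le> d"
    and Fd: "\<And>x. x \<in> {c<..<d} \<Longrightarrow> (F has_real_derivative 1 / f x) (at x)"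
    and FL: "\<And>x y. x \<in> {c..d} \<Longrightarrow> y \<in> {c..d} \<Longrightarrow> \<bar>F x - F y\<bar> \<le> M * \<bar>x - y\<bar>" and M: "M \<ge> 0"
    and Fm: "\<And>x y. x \<in> {c..d} \<Longrightarrow> y \<in> {c..d} \<Longrightarrow> x \<le> y \<Longrightarrow> F x \<le> F y"
    and dle: "dist (snd p) (snd r) \<le> F (fst r) - F (fst p)"
  shows "causal_le I f p r"
proof (cases "fst p = fst r")
  case True
  then have "dist (snd p) (snd r) \<le> 0" using dle by simp
  then have "snd p = snd r" by simp
  then have "p = r" using True by (simp add: prod_eq_iff)
  then show ?thesis unfolding causal_le_def using p by simp
next
  case False
  then have "fst p < fst r" using cd by simp
  from construct_causal[OF geo pos sub cd(1) this cd(3) Fd FL M Fm dle]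
  show ?thesis by simp
qed

lemma diamond_compact:
  fixes p q :: "real \<times> 'a::metric_space"
  assumes geo: "geodesic_space TYPE('a)" and proper: "proper_metric_space TYPE('a)"
    and iv: "is_interval I" and cont: "continuous_on I f" and pos: "\<forall>t\<in>I. f t > 0"
    and p: "p \<in> cone_space I" and q: "q \<in> cone_space I"
  shows "compactin (cone_topology I) (causal_diamond I f p q)"
proof -
  define J where "J = causal_diamond I f p q"
  have Jcone: "J \<subseteq> cone_space I"
    unfolding J_def causal_diamond_def using causal_le_cone by blast
  have Jfst: "fst p \<le> fst r \<and> fst r \<le> fst q" if "r \<in> J" for r
    using that causal_le_fst unfolding J_def causal_diamond_def by blast
  have "compact J"
  proof (cases "fst p \<le> fst q")
    case False
    have "r \<notin> J" for r using Jfst[of r] False by linarith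
    then have "J = {}" by blast
    then show ?thesis by simp
  next
    case True
    define c where "c = fst p"
    define d where "d = fst q"
    have cI: "c \<in> I" "d \<in> I" using p q unfolding c_def d_def by (simp_all add: cone_space_fst)
    have sub: "{c..d} \<subseteq> I"
    proof
      fix x assume "x \<in> {c..d}"
      then have "c \<le> x \<and> x \<le> d" by simp
      moreover have "\<forall>a\<in>I. \<forall>b\<in>I. \<forall>x. a \<le> x \<and> x \<le> b \<longrightarrow> x \<in> I" using iv unfolding is_interval_1 .
      ultimately show "x \<in> I" using cI by blast
    qed
    obtain M F where M: "M \<ge> 0" and Fd': "\<forall>x\<in>{c<..<d}. (F has_real_derivative 1 / f x) (at x)"
      and FL': "\<forall>x\<in>{c..d}. \<forall>y\<in>{c..d}. \<bar>F x - F y\<bar> \<le> M * \<bar>x - y\<bar>"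
      and Fm': "\<forall>x\<in>{c..d}. \<forall>y\<in>{c..d}. x \<le> y \<longrightarrow> F x \<le> F y"
      using F_exists'[OF cont pos sub] by (elim exE conjE)
    have Fd: "\<And>x. x \<in> {c<..<d} \<Longrightarrow> (F has_real_derivative 1 / f x) (at x)" using Fd' by blast
    have FL: "\<And>x y. x \<in> {c..d} \<Longrightarrow> y \<in> {c..d} \<Longrightarrow> \<bar>F x - F y\<bar> \<le> M * \<bar>x - y\<bar>" using FL' by blast
    have Fm: "\<And>x y. x \<in> {c..d} \<Longrightarrow> y \<in> {c..d} \<Longrightarrow> x \<le> y \<Longrightarrow> F x \<le> F y" using Fm' by blast
    have Fc: "continuous_on {c..d} F"
    proof (rule lipschitz_on_continuous_on)
      show "M-lipschitz_on {c..d} F" using FL M by (intro lipschitz_onI) (auto simp: dist_real_def)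
    qed
    define T where "T = {c..d} \<times> (UNIV :: 'a set)"
    define h1 where "h1 r = F (fst r) - F c - dist (snd p) (snd r)" for r :: "real \<times> 'a"
    define h2 where "h2 r = F d - F (fst r) - dist (snd r) (snd q)" for r :: "real \<times> 'a"
    define S where "S = (T \<inter> h1 -` {0..}) \<inter> h2 -` {0..}"
    have JS: "J = S"
    proof
      show "J \<subseteq> S"
      proof
        fix r assume r: "r \<in> J"
        have le1: "causal_le I f p r" and le2: "causal_le I f r q"
          using r unfolding J_def causal_diamond_def by auto
        have rb: "c \<le> fst r" "fst r \<le> d" using Jfst[OF r] unfolding c_def d_def by auto
        have "dist (snd p) (snd r) \<le> F (fst r) - F (fst p)"
          by (rule causal_le_bound[OF le1 pos _ _ M Fd FL]) (use rb in \<open>auto simp: c_def\<close>)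
        moreover have "dist (snd r) (snd q) \<le> F (fst q) - F (fst r)"
          by (rule causal_le_bound[OF le2 pos _ _ M Fd FL]) (use rb in \<open>auto simp: d_def\<close>)
        ultimately have "h1 r \<ge> 0" "h2 r \<ge> 0" unfolding h1_def h2_def c_def d_def by simp_all
        moreover have "r \<in> T" using rb unfolding T_def by (simp add: mem_Times_iff)
        ultimately show "r \<in> S" unfolding S_def by simp
      qed
    next
      show "S \<subseteq> J"
      proof
        fix r assume r: "r \<in> S"
        then have "r \<in> T" "h1 r \<ge> 0" "h2 r \<ge> 0" unfolding S_def by simp_all
        then have rb: "c \<le> fst r" "fst r \<le> d" and d1: "dist (snd p) (snd r) \<le> F (fst r) - F c"
          and d2: "dist (snd r) (snd q) \<le> F d - F (fst r)"
          unfolding T_def h1_def h2_def by (simp_all add: mem_Times_iff)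
        have "fst r \<in> {c..d}" using rb by simp
        then have rI: "r \<in> cone_space I" using sub by (auto simp: cone_space_fst)
        have "causal_le I f p r"
          by (rule causal_le_construct[OF geo pos p sub _ _ _ Fd FL M Fm]) (use rb d1 in \<open>auto simp: c_def\<close>)
        moreover have "causal_le I f r q"
          by (rule causal_le_construct[OF geo pos rI sub _ _ _ Fd FL M Fm]) (use rb d2 in \<open>auto simp: d_def\<close>)
        ultimately show "r \<in> J" unfolding J_def causal_diamond_def by simp
      qed
    qed
    have Tc: "closed T" unfolding T_def by (intro closed_Times) auto
    have cF: "continuous_on T (\<lambda>r. F (fst r))"
      by (rule continuous_on_compose2[OF Fc continuous_on_fst[OF continuous_on_id]]) (auto simp: T_def)
    have "continuous_on T h1" unfolding h1_def
      by (intro continuous_on_diff continuous_on_dist cF continuous_on_const continuous_on_snd continuous_on_id)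
    then have "closed (T \<inter> h1 -` {0..})"
      using Tc by (rule continuous_closed_preimage) simp
    moreover have "continuous_on (T \<inter> h1 -` {0..}) h2"
      unfolding h2_def
      by (intro continuous_on_diff continuous_on_dist continuous_on_subset[OF cF] continuous_on_const
          continuous_on_snd continuous_on_id) auto
    then have Sc: "closed S" unfolding S_def using \<open>closed (T \<inter> h1 -` {0..})\<close>
      by (rule continuous_closed_preimage) simp
    define R where "R = F d - F c"
    have SB: "S \<subseteq> {c..d} \<times> cball (snd p) R"
    proof
      fix r assume r: "r \<in> S"
      then have "r \<in> T" "h1 r \<ge> 0" unfolding S_def by simp_all
      then have rb: "c \<le> fst r" "fst r \<le> d" and d1: "dist (snd p) (snd r) \<le> F (fst r) - F c"
        unfolding T_def h1_def by (simp_all add: mem_Times_iff)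
      have "F (fst r) \<le> F d" using Fm rb by auto
      then have "dist (snd p) (snd r) \<le> R" using d1 unfolding R_def by simp
      then show "r \<in> {c..d} \<times> cball (snd p) R" using rb by (simp add: mem_Times_iff)
    qed
    have "compact ({c..d} \<times> cball (snd p) R)"
      using proper unfolding proper_metric_space_def by (intro compact_Times) auto
    then have "compact (S \<inter> ({c..d} \<times> cball (snd p) R))" by (rule closed_Int_compact[OF Sc])
    moreover have "S \<inter> ({c..d} \<times> cball (snd p) R) = S" using SB by blast
    ultimately show ?thesis using JS by simp
  qed
  then show ?thesis unfolding J_def[symmetric] compactin_cone using Jcone by simp
qed

lemma part_bounds:
  fixes t :: "nat \<Rightarrow> real"
  assumes t0: "t 0 = a" and tn: "t n = b" and m: "\<forall>i<n. t i \<le> t (Suc i)" and i: "i \<le> n"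
  shows "a \<le> t i \<and> t i \<le> b"
proof
  show "a \<le> t i" using i
  proof (induction i)
    case 0 then show ?case using t0 by simp
  next
    case (Suc i)
    then have "a \<le> t i" "t i \<le> t (Suc i)" using m by auto
    then show ?case by simp
  qed
  show "t i \<le> b" using i
  proof (induction rule: inc_induct)
    case base then show ?case using tn by simp
  next
    case (step k)
    then show ?case using m by (meson order_trans)
  qed
qed

lemma nti:
  assumes cont: "continuous_on I f" and pos: "\<forall>t\<in>I. f t > 0"
  shows "non_totally_imprisoning I f TYPE('a::metric_space)"
  unfolding non_totally_imprisoning_def
proof (intro allI impI)
  fix K :: "(real \<times> 'a) set"
  assume "compactin (cone_topology I) K"
  then have Kc: "compact K" and KI: "K \<subseteq> cone_space I" by (simp_all add: compactin_cone)
  show "\<exists>C>0. \<forall>\<gamma> a b. causal_curve I f \<gamma> a b \<and> \<gamma> ` {a..b} \<subseteq> K \<longrightarrow>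
                 curve_length cone_dist \<gamma> a b \<le> ereal C"
  proof (cases "K = {}")
    case True
    show ?thesis
    proof (intro exI[of _ 1] conjI allI impI)
      fix \<gamma> :: "real \<Rightarrow> real \<times> 'a" and a b
      assume H: "causal_curve I f \<gamma> a b \<and> \<gamma> ` {a..b} \<subseteq> K"
      then have "a < b" using causal_curveD(1) by blast
      then have "\<gamma> a \<in> K" using H by auto
      then show "curve_length cone_dist \<gamma> a b \<le> ereal 1" using True by simp
    qed simp
  next
    case False
    define FK where "FK = fst ` K"
    have FKc: "compact FK" unfolding FK_def
      by (intro compact_continuous_image continuous_on_fst continuous_on_id Kc)
    have FKne: "FK \<noteq> {}" using False unfolding FK_def by simp
    have FKI: "FK \<subseteq> I" using KI unfolding FK_def by (auto simp: cone_space_fst)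
    obtain x0 where x0: "x0 \<in> FK" and x0min: "\<forall>y\<in>FK. f x0 \<le> f y"
      using continuous_attains_inf[OF FKc FKne continuous_on_subset[OF cont FKI]] by blast
    define m where "m = f x0"
    have m: "m > 0" unfolding m_def using pos x0 FKI by auto
    obtain B where B: "\<forall>x\<in>FK. norm x \<le> B" using compact_imp_bounded[OF FKc] unfolding bounded_iff by blast
    have B0: "B \<ge> 0" using B x0 by force
    define C where "C = (1 + 1/m) * (2 * B) + 1"
    have "(1 + 1/m) * (2 * B) \<ge> 0" using m B0 by simp
    then have C0: "C > 0" unfolding C_def by linarith
    show ?thesis
    proof (intro exI[of _ C] conjI allI impI)
      show "C > 0" by (rule C0)
      fix \<gamma> :: "real \<Rightarrow> real \<times> 'a" and a b
      assume H: "causal_curve I f \<gamma> a b \<and> \<gamma> ` {a..b} \<subseteq> K"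
      then have c: "causal_curve I f \<gamma> a b" and img: "\<gamma> ` {a..b} \<subseteq> K" by simp_all
      have inFK: "fst (\<gamma> u) \<in> FK" if "u \<in> {a..b}" for u
      proof -
        have "\<gamma> u \<in> K" using img that by blast
        then show ?thesis unfolding FK_def by (rule imageI)
      qed
      have fm: "f (fst (\<gamma> u)) \<ge> m" if "u \<in> {a..b}" for u using x0min inFK[OF that] unfolding m_def by auto
      have bnd2: "\<bar>fst (\<gamma> u) - fst (\<gamma> w)\<bar> \<le> 2 * B" if "u \<in> {a..b}" "w \<in> {a..b}" for u w
      proof -
        have "\<bar>fst (\<gamma> u)\<bar> \<le> B" "\<bar>fst (\<gamma> w)\<bar> \<le> B" using B inFK[OF that(1)] inFK[OF that(2)] by auto
        then show ?thesis by linarith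
      qed
      have mono_cases: "strict_mono_on {a..b} (fst \<circ> \<gamma>) \<or> strict_mono_on {a..b} (\<lambda>t. - fst (\<gamma> t))"
        by (rule causal_curveD(4)[OF c])
      show "curve_length cone_dist \<gamma> a b \<le> ereal C"
        unfolding curve_length_def
      proof (rule SUP_least)
        fix P assume "P \<in> {(n, t). t 0 = a \<and> t n = b \<and> (\<forall>i<n. t i \<le> t (Suc i))}"
        then obtain n t where P: "P = (n, t)" and t0: "t 0 = a" and tn: "t n = b"
          and tm: "\<forall>i<n. t i \<le> t (Suc i)" by blast
        have tb: "t i \<in> {a..b}" if "i \<le> n" for i using part_bounds[OF t0 tn tm that] by simp
        define \<alpha> where "\<alpha> i = fst (\<gamma> (t i))" for i
        have trm: "cone_dist (\<gamma> (t i)) (\<gamma> (t (Suc i))) \<le> (1 + 1/m) * \<bar>\<alpha> (Suc i) - \<alpha> i\<bar>" if "i < n" for i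
        proof -
          have "dist (snd (\<gamma> (t i))) (snd (\<gamma> (t (Suc i)))) \<le> \<bar>\<alpha> (Suc i) - \<alpha> i\<bar> / m"
            unfolding \<alpha>_def using tb[of i] tb[of "Suc i"] tm that
            by (intro ntl_bound[OF c m fm]) auto
          then show ?thesis unfolding cone_dist_def \<alpha>_def
            by (simp add: algebra_simps abs_minus_commute)
        qed
        have sumabs: "(\<Sum>i<n. \<bar>\<alpha> (Suc i) - \<alpha> i\<bar>) = \<bar>\<alpha> n - \<alpha> 0\<bar>"
          using mono_cases
        proof
          assume sm: "strict_mono_on {a..b} (fst \<circ> \<gamma>)"
          have "(\<Sum>i<n. \<bar>\<alpha> (Suc i) - \<alpha> i\<bar>) = (\<Sum>i<n. \<alpha> (Suc i) - \<alpha> i)"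
          proof (rule sum.cong)
            fix i assume "i \<in> {..<n}"
            then have "i < n" by simp
            then have "\<alpha> i \<le> \<alpha> (Suc i)" unfolding \<alpha>_def
              using strict_mono_on_leD[OF sm, of "t i" "t (Suc i)"] tb[of i] tb[of "Suc i"] tm by auto
            then show "\<bar>\<alpha> (Suc i) - \<alpha> i\<bar> = \<alpha> (Suc i) - \<alpha> i" by simp
          qed simp
          also have "\<dots> = \<alpha> n - \<alpha> 0" by (rule sum_lessThan_telescope)
          also have "\<dots> = \<bar>\<alpha> n - \<alpha> 0\<bar>"
            using strict_mono_on_leD[OF sm, of "t 0" "t n"] tb[of 0] tb[of n] t0 tn
            unfolding \<alpha>_def by (cases "n = 0") auto
          finally show ?thesis .
        next
          assume sm: "strict_mono_on {a..b} (\<lambda>t. - fst (\<gamma> t))"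
          have "(\<Sum>i<n. \<bar>\<alpha> (Suc i) - \<alpha> i\<bar>) = (\<Sum>i<n. (- \<alpha> (Suc i)) - (- \<alpha> i))"
          proof (rule sum.cong)
            fix i assume "i \<in> {..<n}"
            then have "i < n" by simp
            then have "- \<alpha> i \<le> - \<alpha> (Suc i)" unfolding \<alpha>_def
              using strict_mono_on_leD[OF sm, of "t i" "t (Suc i)"] tb[of i] tb[of "Suc i"] tm by auto
            then show "\<bar>\<alpha> (Suc i) - \<alpha> i\<bar> = (- \<alpha> (Suc i)) - (- \<alpha> i)" by simp
          qed simp
          also have "\<dots> = (- \<alpha> n) - (- \<alpha> 0)" by (rule sum_lessThan_telescope)
          also have "\<dots> = \<bar>\<alpha> n - \<alpha> 0\<bar>"
            using strict_mono_on_leD[OF sm, of "t 0" "t n"] tb[of 0] tb[of n] t0 tn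
            unfolding \<alpha>_def by (cases "n = 0") auto
          finally show ?thesis .
        qed
        have "(\<Sum>i<n. cone_dist (\<gamma> (t i)) (\<gamma> (t (Suc i)))) \<le> (\<Sum>i<n. (1 + 1/m) * \<bar>\<alpha> (Suc i) - \<alpha> i\<bar>)"
          by (rule sum_mono) (use trm in auto)
        also have "\<dots> = (1 + 1/m) * \<bar>\<alpha> n - \<alpha> 0\<bar>" by (simp add: sum_distrib_left[symmetric] sumabs)
        also have "\<dots> \<le> (1 + 1/m) * (2 * B)"
          using bnd2[of "t n" "t 0"] tb[of n] tb[of 0] m unfolding \<alpha>_def
          by (intro mult_left_mono) auto
        also have "\<dots> < C" unfolding C_def by simp
        finally have "(\<Sum>i<n. cone_dist (\<gamma> (t i)) (\<gamma> (t (Suc i)))) \<le> C" by simp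
        then show "ereal (\<Sum>i<fst P. cone_dist (\<gamma> (snd P i)) (\<gamma> (snd P (Suc i)))) \<le> ereal C"
          unfolding P by simp
      qed
    qed
  qed
qed

theorem proposition4p10:
  fixes I :: "real set" and f :: "real \<Rightarrow> real"
  assumes "geodesic_space TYPE('a::metric_space)"
      and "length_space TYPE('a)"
      and "proper_metric_space TYPE('a)"
      and "is_interval I" and "open I" and "I \<noteq> {}"
      and "continuous_on I f" and "\<forall>t\<in>I. f t > 0"
  shows "globally_hyperbolic I f TYPE('a)"
  unfolding globally_hyperbolic_def
proof (intro conjI allI impI)
  show "non_totally_imprisoning I f TYPE('a)" by (rule nti[OF assms(7,8)])
  fix p q :: "real \<times> 'a"
  assume "p \<in> cone_space I \<and> q \<in> cone_space I"
  then show "compactin (cone_topology I) (causal_diamond I f p q)"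
    using diamond_compact[OF assms(1,3,4,7,8)] by blast
qed

end
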